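(* For any $n\ge2$, there exists a $\Sigma^0_n$ equivalence relation on $2^\mathbb{N}$ which is not $\Pi^0_n$-graphable. Also, for any $n\ge1$, there exists a $\Sigma^0_n$ equivalence relation on $\mathbb{N}$ which is not $\Pi^0_n$-graphable.
   Context: $E$ is $\Gamma$-graphable if there is a simple undirected graph $G$ in $\Gamma$ whose connectedness relation (connected by a finite path) equals $E$. Pointclasses are lightface. *)

theory Defs
  imports Main
begin

text \<open>Lightface arithmetical pointclasses are defined via formulas of first-order
arithmetic (language 0, S, +, *, =, <) extended by membership atoms X_i(t) for
real (element of Cantor space) variables X_i.  Number variables use de Bruijn
indices.\<close>

datatype trm = Var nat | Zero | Sc trm | Pl trm trm | Tm trm trm

datatype fm =
    Eq trm trm | Lt trm trm | Mem nat trm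
  | Neg fm | Conj fm fm | Disj fm fm
  | BEx trm fm | BAll trm fm
  | Ex fm | All fm

primrec evt :: "(nat \<Rightarrow> nat) \<Rightarrow> trm \<Rightarrow> nat" where
  "evt e (Var i) = e i"
| "evt e Zero = 0"
| "evt e (Sc t) = Suc (evt e t)"
| "evt e (Pl s t) = evt e s + evt e t"
| "evt e (Tm s t) = evt e s * evt e t"

primrec evf :: "(nat \<Rightarrow> nat) \<Rightarrow> (nat \<Rightarrow> nat \<Rightarrow> bool) \<Rightarrow> fm \<Rightarrow> bool" where
  "evf e X (Eq s t) = (evt e s = evt e t)"
| "evf e X (Lt s t) = (evt e s < evt e t)"
| "evf e X (Mem i t) = X i (evt e t)"
| "evf e X (Neg p) = (\<not> evf e X p)"
| "evf e X (Conj p q) = (evf e X p \<and> evf e X q)"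
| "evf e X (Disj p q) = (evf e X p \<or> evf e X q)"
| "evf e X (BEx t p) = (\<exists>x < evt e t. evf (case_nat x e) X p)"
| "evf e X (BAll t p) = (\<forall>x < evt e t. evf (case_nat x e) X p)"
| "evf e X (Ex p) = (\<exists>x. evf (case_nat x e) X p)"
| "evf e X (All p) = (\<forall>x. evf (case_nat x e) X p)"

primrec delta0 :: "fm \<Rightarrow> bool" where
  "delta0 (Eq s t) = True"
| "delta0 (Lt s t) = True"
| "delta0 (Mem i t) = True"
| "delta0 (Neg p) = delta0 p"
| "delta0 (Conj p q) = (delta0 p \<and> delta0 q)"
| "delta0 (Disj p q) = (delta0 p \<and> delta0 q)"
| "delta0 (BEx t p) = delta0 p"
| "delta0 (BAll t p) = delta0 p"
| "delta0 (Ex p) = False"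
| "delta0 (All p) = False"

primrec sigma_fm :: "nat \<Rightarrow> fm \<Rightarrow> bool" where
  "sigma_fm 0 p = delta0 p"
| "sigma_fm (Suc n) p = (\<exists>q. p = Ex (Neg q) \<and> sigma_fm n q)"

type_synonym cantor = "nat \<Rightarrow> bool"

definition Sigma_cantor2 :: "nat \<Rightarrow> (cantor \<times> cantor) set \<Rightarrow> bool" where
  "Sigma_cantor2 n S \<longleftrightarrow> (\<exists>p. sigma_fm n p \<and>
     (\<forall>x y. (x, y) \<in> S \<longleftrightarrow>
        evf (\<lambda>_. 0) (\<lambda>i. if i = 0 then x else if i = 1 then y else (\<lambda>_. False)) p))"

definition Pi_cantor2 :: "nat \<Rightarrow> (cantor \<times> cantor) set \<Rightarrow> bool" where
  "Pi_cantor2 n S \<longleftrightarrow> Sigma_cantor2 n (- S)"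

definition Sigma_nat2 :: "nat \<Rightarrow> (nat \<times> nat) set \<Rightarrow> bool" where
  "Sigma_nat2 n S \<longleftrightarrow> (\<exists>p. sigma_fm n p \<and>
     (\<forall>a b. (a, b) \<in> S \<longleftrightarrow>
        evf (\<lambda>i. if i = 0 then a else if i = 1 then b else 0) (\<lambda>_ _. False) p))"

definition Pi_nat2 :: "nat \<Rightarrow> (nat \<times> nat) set \<Rightarrow> bool" where
  "Pi_nat2 n S \<longleftrightarrow> Sigma_nat2 n (- S)"

definition graphable :: "('a rel \<Rightarrow> bool) \<Rightarrow> 'a rel \<Rightarrow> bool" where
  "graphable \<Gamma> E \<longleftrightarrow> (\<exists>G. \<Gamma> G \<and> sym G \<and> irrefl G \<and> G\<^sup>* = E)"

end

theory Submission
  imports Defs "HOL-Library.Nat_Bijection" "HOL-Number_Theory.Cong"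
begin


primrec substt :: "(nat \<Rightarrow> trm) \<Rightarrow> trm \<Rightarrow> trm" where
  "substt s (Var i) = s i"
| "substt s Zero = Zero"
| "substt s (Sc t) = Sc (substt s t)"
| "substt s (Pl a b) = Pl (substt s a) (substt s b)"
| "substt s (Tm a b) = Tm (substt s a) (substt s b)"

definition liftt :: "trm \<Rightarrow> trm" where "liftt = substt (\<lambda>i. Var (Suc i))"

definition ups :: "(nat \<Rightarrow> trm) \<Rightarrow> nat \<Rightarrow> trm" where
  "ups s = case_nat (Var 0) (\<lambda>i. liftt (s i))"

primrec substM :: "(nat \<Rightarrow> trm) \<Rightarrow> trm \<Rightarrow> trm \<Rightarrow> bool \<Rightarrow> fm \<Rightarrow> fm" where
  "substM s A B m (Eq a b) = Eq (substt s a) (substt s b)"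
| "substM s A B m (Lt a b) = Lt (substt s a) (substt s b)"
| "substM s A B m (Mem i t) = (if m then (if i = 0 then Eq (substt s t) A else if i = 1 then Eq (substt s t) B
        else Neg (Eq Zero Zero)) else Mem i (substt s t))"
| "substM s A B m (Neg p) = Neg (substM s A B m p)"
| "substM s A B m (Conj p q) = Conj (substM s A B m p) (substM s A B m q)"
| "substM s A B m (Disj p q) = Disj (substM s A B m p) (substM s A B m q)"
| "substM s A B m (BEx t p) = BEx (substt s t) (substM (ups s) (liftt A) (liftt B) m p)"
| "substM s A B m (BAll t p) = BAll (substt s t) (substM (ups s) (liftt A) (liftt B) m p)"
| "substM s A B m (Ex p) = Ex (substM (ups s) (liftt A) (liftt B) m p)"
| "substM s A B m (All p) = All (substM (ups s) (liftt A) (liftt B) m p)"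

abbreviation substf :: "(nat \<Rightarrow> trm) \<Rightarrow> fm \<Rightarrow> fm" where
  "substf s p \<equiv> substM s Zero Zero False p"

lemma evt_substt: "evt e (substt s t) = evt (\<lambda>i. evt e (s i)) t"
  by (induction t) auto

lemma evt_liftt[simp]: "evt (case_nat x e) (liftt t) = evt e t"
  by (simp add: liftt_def evt_substt)

lemma ups_env: "(\<lambda>i. evt (case_nat x e) (ups s i)) = case_nat x (\<lambda>i. evt e (s i))"
  by (rule ext) (simp add: ups_def split: nat.split)

definition Xm :: "(nat \<Rightarrow> nat \<Rightarrow> bool) \<Rightarrow> nat \<Rightarrow> nat \<Rightarrow> bool \<Rightarrow> nat \<Rightarrow> nat \<Rightarrow> bool" where
  "Xm X a b m = (if m then (\<lambda>i. if i = 0 then (\<lambda>n. n = a) else if i = 1 then (\<lambda>n. n = b) else (\<lambda>_. False)) else X)"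

lemma evf_substM:
  "evf e X (substM s A B m p) = evf (\<lambda>i. evt e (s i)) (Xm X (evt e A) (evt e B) m) p"
proof (induction p arbitrary: e s A B)
  case (BEx t p) then show ?case by (simp add: ups_env evt_substt)
next
  case (BAll t p) then show ?case by (simp add: ups_env evt_substt)
next
  case (Ex p) then show ?case by (simp add: ups_env)
next
  case (All p) then show ?case by (simp add: ups_env)
qed (auto simp: evt_substt Xm_def)

lemma evf_substf: "evf e X (substf s p) = evf (\<lambda>i. evt e (s i)) X p"
  by (simp add: evf_substM Xm_def)

lemma delta0_substM[simp]: "delta0 (substM s A B m p) = delta0 p"
  by (induction p arbitrary: s A B) auto

primrec exneg :: "nat \<Rightarrow> fm \<Rightarrow> fm" where
  "exneg 0 d = d"
| "exneg (Suc n) d = Ex (Neg (exneg n d))"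

lemma sigma_exneg: "sigma_fm n p \<longleftrightarrow> (\<exists>d. delta0 d \<and> p = exneg n d)"
  by (induction n arbitrary: p) auto

lemma sigma_exneg2: "delta0 d \<Longrightarrow> sigma_fm n (exneg n d)"
  using sigma_exneg by blast

lemma substM_exneg: "substM s A B m (exneg n d) = exneg n (substM ((ups ^^ n) s) ((liftt ^^ n) A) ((liftt ^^ n) B) m d)"
  by (induction n arbitrary: s A B) (auto simp: funpow_swap1)

definition appenv :: "nat list \<Rightarrow> (nat \<Rightarrow> nat) \<Rightarrow> nat \<Rightarrow> nat" where
  "appenv ys e i = (if i < length ys then ys ! i else e (i - length ys))"

lemma appenv_snoc: "appenv ys (case_nat v e) = appenv (ys @ [v]) e"
proof (rule ext)
  fix i show "appenv ys (case_nat v e) i = appenv (ys @ [v]) e i"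
  proof (cases "i - length ys")
    case (Suc k)
    then have "i - Suc (length ys) = k" by arith
    with Suc show ?thesis by (auto simp: appenv_def nth_append)
  qed (auto simp: appenv_def nth_append)
qed

lemma appenv_cons: "case_nat v (appenv ys e) = appenv (v # ys) e"
  by (rule ext) (auto simp: appenv_def split: nat.split)

lemma appenv_Nil[simp]: "appenv [] e = e"
  by (rule ext) (simp add: appenv_def)

lemma ET: "(\<And>ys. length ys = m \<Longrightarrow> evf (appenv ys e1) X1 d1 = evf (appenv ys e2) X2 d2) \<Longrightarrow>
   evf e1 X1 (exneg m d1) = evf e2 X2 (exneg m d2)"
proof (induction m arbitrary: e1 e2)
  case 0 then show ?case by (metis appenv_Nil exneg.simps(1) list.size(3))
next
  case (Suc m)
  have "evf (case_nat v e1) X1 (exneg m d1) = evf (case_nat v e2) X2 (exneg m d2)" for v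
    by (rule Suc.IH) (simp add: appenv_snoc Suc.prems)
  then show ?case by simp
qed

fun comb :: "bool \<Rightarrow> nat \<Rightarrow> fm \<Rightarrow> fm \<Rightarrow> fm" where
  "comb b 0 d t = (if b then Conj d t else Disj d t)"
| "comb b (Suc m) d t = comb (\<not> b) m d (Neg t)"

lemma delta0_comb: "delta0 d \<Longrightarrow> delta0 t \<Longrightarrow> delta0 (comb b m d t)"
  by (induction b m d t rule: comb.induct) auto

lemma comb_sem: "(\<And>ys. length ys = m \<Longrightarrow> evf (appenv ys e) X t = tv) \<Longrightarrow>
  evf e X (exneg m (comb b m d t)) = (if b then evf e X (exneg m d) \<and> tv else evf e X (exneg m d) \<or> tv)"
proof (induction m arbitrary: e b t tv)
  case 0 then show ?case by (metis appenv_Nil comb.simps(1) evf.simps(5,6) exneg.simps(1) list.size(3))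
next
  case (Suc m)
  have "evf (case_nat v e) X (exneg m (comb (\<not> b) m d (Neg t))) =
     (if \<not> b then evf (case_nat v e) X (exneg m d) \<and> \<not> tv else evf (case_nat v e) X (exneg m d) \<or> \<not> tv)" for v
    by (rule Suc.IH) (simp add: appenv_snoc Suc.prems)
  then show ?case by auto
qed

definition liftn :: "nat \<Rightarrow> fm \<Rightarrow> fm" where "liftn m p = substf (\<lambda>i. Var (i + m)) p"

lemma liftn_sem: "length ys = m \<Longrightarrow> evf (appenv ys e) X (liftn m p) = evf e X p"
  by (simp add: liftn_def evf_substf appenv_def)

definition conjS :: "nat \<Rightarrow> fm \<Rightarrow> fm \<Rightarrow> fm" where
  "conjS m d t = comb True m d (liftn m t)"
definition disjS :: "nat \<Rightarrow> fm \<Rightarrow> fm \<Rightarrow> fm" where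
  "disjS m d t = comb False m d (liftn m t)"

lemma conjS_sem: "evf e X (exneg m (conjS m d t)) = (evf e X (exneg m d) \<and> evf e X t)"
  unfolding conjS_def by (subst comb_sem[where tv = "evf e X t"]) (auto simp: liftn_sem)
lemma disjS_sem: "evf e X (exneg m (disjS m d t)) = (evf e X (exneg m d) \<or> evf e X t)"
  unfolding disjS_def by (subst comb_sem[where tv = "evf e X t"]) (auto simp: liftn_sem)
lemma delta0_conjS: "delta0 d \<Longrightarrow> delta0 t \<Longrightarrow> delta0 (conjS m d t)"
  by (simp add: conjS_def delta0_comb liftn_def)
lemma delta0_disjS: "delta0 d \<Longrightarrow> delta0 t \<Longrightarrow> delta0 (disjS m d t)"
  by (simp add: disjS_def delta0_comb liftn_def)


definition pairEq :: "trm \<Rightarrow> trm \<Rightarrow> trm \<Rightarrow> fm" where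
  "pairEq w a b = Eq (Pl w w) (Pl (Tm (Pl a b) (Sc (Pl a b))) (Pl a a))"

lemma two_triangle: "2 * triangle n = n * Suc n"
  by (induction n) (auto simp: triangle_def)

lemma pair_iff: "(w + w = (a + b) * Suc (a + b) + (a + a)) \<longleftrightarrow> w = prod_encode (a, b)"
proof -
  have "2 * prod_encode (a,b) = (a + b) * Suc (a + b) + (a + a)"
    using two_triangle[of "a+b"] by (simp add: prod_encode_def algebra_simps)
  then show ?thesis by auto
qed

definition msig :: "nat \<Rightarrow> nat \<Rightarrow> trm" where
  "msig m i = (if i < m then Var (i + 2) else if i = m then Var 0 else if i = Suc m then Var 1 else Var (Suc i))"

definition mergeb :: "nat \<Rightarrow> fm \<Rightarrow> fm" where
  "mergeb m d = BEx (Sc (Var m)) (BEx (Sc (Var (Suc m)))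
      (Conj (pairEq (Var (m + 2)) (Var 1) (Var 0)) (substf (msig m) d)))"

lemma delta0_mergeb: "delta0 d \<Longrightarrow> delta0 (mergeb m d)"
  by (simp add: mergeb_def pairEq_def)

lemma mergeb_base:
  assumes "length ys = m" "prod_decode w = (a, b)"
  shows "evf (appenv ys (case_nat w e)) X (mergeb m d) = evf (appenv ys (case_nat b (case_nat a e))) X d"
proof -
  have w: "w = prod_encode (a, b)" using assms(2) by (metis prod_decode_inverse)
  have ab: "a \<le> w" "b \<le> w" using w le_prod_encode_1 le_prod_encode_2 by auto
  have am: "appenv ys (case_nat w e) m = w" using assms(1) by (simp add: appenv_def)
  have env: "(\<lambda>i. evt (case_nat b' (case_nat a' (appenv ys (case_nat w e)))) (msig m i)) =
       appenv ys (case_nat b' (case_nat a' e))" for a' b'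
  proof (rule ext)
    fix i
    show "evt (case_nat b' (case_nat a' (appenv ys (case_nat w e)))) (msig m i) = appenv ys (case_nat b' (case_nat a' e)) i"
    proof -
      consider "i < m" | "i = m" | "i = Suc m" | "i > Suc m" by linarith
      then show ?thesis
      proof cases
        case 4
        then obtain k where k: "i = Suc (Suc m) + k" by (metis add_Suc less_imp_Suc_add)
        show ?thesis using assms(1) k by (simp add: msig_def appenv_def)
      qed (use assms(1) in \<open>auto simp: msig_def appenv_def\<close>)
    qed
  qed
  have "evf (appenv ys (case_nat w e)) X (mergeb m d) =
     (\<exists>a'<Suc w. \<exists>b'<Suc w. w + w = (a' + b') * Suc (a' + b') + (a' + a') \<and>
        evf (appenv ys (case_nat b' (case_nat a' e))) X d)"
    using assms(1) by (simp add: mergeb_def pairEq_def evf_substf env am appenv_def)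
  also have "\<dots> = evf (appenv ys (case_nat b (case_nat a e))) X d"
    unfolding pair_iff using ab w by auto
  finally show ?thesis .
qed

lemma mergeb_sem: "evf e X (exneg (Suc m) (mergeb m d)) = (\<exists>v. evf (case_nat v e) X (exneg (Suc m) d))"
proof -
  have 1: "evf (case_nat w e) X (exneg m (mergeb m d)) =
      evf (case_nat (snd (prod_decode w)) (case_nat (fst (prod_decode w)) e)) X (exneg m d)" for w
    by (rule ET) (rule mergeb_base, auto)
  have "evf e X (exneg (Suc m) (mergeb m d)) =
     (\<exists>w. \<not> evf (case_nat (snd (prod_decode w)) (case_nat (fst (prod_decode w)) e)) X (exneg m d))"
    by (simp add: 1)
  also have "\<dots> = (\<exists>a b. \<not> evf (case_nat b (case_nat a e)) X (exneg m d))"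
    by (metis fst_conv prod_encode_inverse snd_conv)
  finally show ?thesis by simp
qed

definition tau1 :: "nat \<Rightarrow> nat \<Rightarrow> trm" where
  "tau1 m = case_nat (Var m) (\<lambda>k. Var (m + 2 + k))"

definition conjP1 :: "nat \<Rightarrow> fm \<Rightarrow> fm \<Rightarrow> fm" where
  "conjP1 m d c = comb True m d (substf (tau1 m) c)"

lemma delta0_conjP1: "delta0 d \<Longrightarrow> delta0 c \<Longrightarrow> delta0 (conjP1 m d c)"
  by (simp add: conjP1_def delta0_comb)

lemma conjP1_sem: "evf e X (exneg (Suc (Suc m)) (conjP1 m d c)) =
   ((\<forall>i. evf (case_nat i e) X c) \<and> evf e X (exneg (Suc (Suc m)) d))"
proof -
  have t: "evf (appenv ys (case_nat y2 (case_nat y1 e))) X (substf (tau1 m) c) = evf (case_nat y2 e) X c"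
    if "length ys = m" for ys y2 y1
  proof -
    have "(\<lambda>i. evt (appenv ys (case_nat y2 (case_nat y1 e))) (tau1 m i)) = case_nat y2 e"
      by (rule ext) (use that in \<open>auto simp: tau1_def appenv_def split: nat.split\<close>)
    then show ?thesis by (simp add: evf_substf)
  qed
  have "evf (case_nat y2 (case_nat y1 e)) X (exneg m (conjP1 m d c)) =
     (evf (case_nat y2 (case_nat y1 e)) X (exneg m d) \<and> evf (case_nat y2 e) X c)" for y1 y2
    unfolding conjP1_def by (subst comb_sem[where tv = "evf (case_nat y2 e) X c"]) (auto simp: t)
  then show ?thesis by auto
qed


datatype nt = V nat | Z | S nt | Ad nt nt | Mu nt nt
datatype nf = NEq nt nt | NLt nt nt | NNeg nf | NCj nf nf | NDj nf nf | NBE nat nt nf | NBA nat nt nf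

primrec evnt :: "(nat \<Rightarrow> nat) \<Rightarrow> nt \<Rightarrow> nat" where
  "evnt r (V x) = r x" | "evnt r Z = 0" | "evnt r (S t) = Suc (evnt r t)"
| "evnt r (Ad a b) = evnt r a + evnt r b" | "evnt r (Mu a b) = evnt r a * evnt r b"

primrec evnf :: "(nat \<Rightarrow> nat) \<Rightarrow> nf \<Rightarrow> bool" where
  "evnf r (NEq a b) = (evnt r a = evnt r b)"
| "evnf r (NLt a b) = (evnt r a < evnt r b)"
| "evnf r (NNeg p) = (\<not> evnf r p)"
| "evnf r (NCj p q) = (evnf r p \<and> evnf r q)"
| "evnf r (NDj p q) = (evnf r p \<or> evnf r q)"
| "evnf r (NBE x t p) = (\<exists>v < evnt r t. evnf (r(x := v)) p)"
| "evnf r (NBA x t p) = (\<forall>v < evnt r t. evnf (r(x := v)) p)"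

primrec idx :: "nat list \<Rightarrow> nat \<Rightarrow> nat" where
  "idx [] x = 0" | "idx (y # ys) x = (if x = y then 0 else Suc (idx ys x))"

primrec ct :: "nat list \<Rightarrow> nt \<Rightarrow> trm" where
  "ct c (V x) = Var (if x \<in> set c then idx c x else length c + x)"
| "ct c Z = Zero" | "ct c (S t) = Sc (ct c t)"
| "ct c (Ad a b) = Pl (ct c a) (ct c b)" | "ct c (Mu a b) = Tm (ct c a) (ct c b)"

primrec cf :: "nat list \<Rightarrow> nf \<Rightarrow> fm" where
  "cf c (NEq a b) = Eq (ct c a) (ct c b)"
| "cf c (NLt a b) = Lt (ct c a) (ct c b)"
| "cf c (NNeg p) = Neg (cf c p)"
| "cf c (NCj p q) = Conj (cf c p) (cf c q)"
| "cf c (NDj p q) = Disj (cf c p) (cf c q)"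
| "cf c (NBE x t p) = BEx (ct c t) (cf (x # c) p)"
| "cf c (NBA x t p) = BAll (ct c t) (cf (x # c) p)"

definition envc :: "nat list \<Rightarrow> (nat \<Rightarrow> nat) \<Rightarrow> nat \<Rightarrow> nat" where
  "envc c e y = (if y \<in> set c then e (idx c y) else e (length c + y))"

lemma envc_cons: "envc (x # c) (case_nat v e) = (envc c e)(x := v)"
  by (rule ext) (auto simp: envc_def)

lemma evt_ct: "evt e (ct c t) = evnt (envc c e) t"
  by (induction t) (auto simp: envc_def)

lemma evf_cf: "evf e X (cf c p) = evnf (envc c e) p"
  by (induction p arbitrary: c e) (auto simp: evt_ct envc_cons)

lemma envc_Nil[simp]: "envc [] e = e"
  by (rule ext) (simp add: envc_def)

lemma evf_cf0: "evf e X (cf [] p) = evnf e p"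
  by (simp add: evf_cf)

lemma delta0_cf: "delta0 (cf c p)"
  by (induction p arbitrary: c) auto

primrec numN :: "nat \<Rightarrow> nt" where "numN 0 = Z" | "numN (Suc k) = S (numN k)"
lemma evnt_numN[simp]: "evnt r (numN k) = k" by (induction k) auto

definition P :: "nat \<Rightarrow> nat \<Rightarrow> nat" where "P a b = (a + b) * (a + b) + a"

lemma P_ge1: "a \<le> P a b" and P_ge2: "b \<le> P a b"
proof -
  show "a \<le> P a b" by (simp add: P_def)
  have "b \<le> (a + b) * (a + b)"
    by (metis add_leD2 le_square)
  then show "b \<le> P a b" by (simp add: P_def)
qed

lemma P_inj: "P a b = P a' b' \<Longrightarrow> a = a' \<and> b = b'"
proof -
  assume h: "P a b = P a' b'"
  let ?s = "a + b :: nat" and ?s' = "a' + b' :: nat"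
  have n1: "\<not> ?s < ?s'"
  proof
    assume lt: "?s < ?s'"
    have "Suc ?s \<le> ?s'" using lt by linarith
    then have "Suc ?s * Suc ?s \<le> ?s' * ?s'" using mult_le_mono by blast
    moreover have "P a b < Suc ?s * Suc ?s" unfolding P_def by simp
    moreover have "?s' * ?s' \<le> P a' b'" unfolding P_def by simp
    ultimately show False using h by linarith
  qed
  have n2: "\<not> ?s' < ?s"
  proof
    assume lt: "?s' < ?s"
    have "Suc ?s' \<le> ?s" using lt by linarith
    then have "Suc ?s' * Suc ?s' \<le> ?s * ?s" using mult_le_mono by blast
    moreover have "P a' b' < Suc ?s' * Suc ?s'" unfolding P_def by simp
    moreover have "?s * ?s \<le> P a b" unfolding P_def by simp
    ultimately show False using h by linarith
  qed
  have "?s = ?s'" using n1 n2 by linarith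
  then show ?thesis using h by (simp add: P_def)
qed

lemma P_eq_iff[simp]: "P a b = P a' b' \<longleftrightarrow> a = a' \<and> b = b'"
  using P_inj by blast

definition lcons :: "nat \<Rightarrow> nat \<Rightarrow> nat" where "lcons x r = Suc (P x r)"

primrec lc :: "nat list \<Rightarrow> nat" where
  "lc [] = 0" | "lc (x # xs) = lcons x (lc xs)"

definition envl :: "nat list \<Rightarrow> nat \<Rightarrow> nat" where
  "envl xs i = (if i < length xs then xs ! i else 0)"

lemma envl_cons: "envl (x # xs) = case_nat x (envl xs)"
  by (rule ext) (simp add: envl_def split: nat.split)

primrec tc :: "trm \<Rightarrow> nat" where
  "tc (Var i) = 5 * i" | "tc Zero = 1" | "tc (Sc t) = 5 * tc t + 2"
| "tc (Pl a b) = 5 * P (tc a) (tc b) + 3" | "tc (Tm a b) = 5 * P (tc a) (tc b) + 4"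

primrec fc :: "fm \<Rightarrow> nat" where
  "fc (Eq a b) = 10 * P (tc a) (tc b)"
| "fc (Lt a b) = 10 * P (tc a) (tc b) + 1"
| "fc (Mem i t) = 10 * P i (tc t) + 2"
| "fc (Neg p) = 10 * fc p + 3"
| "fc (Conj p q) = 10 * P (fc p) (fc q) + 4"
| "fc (Disj p q) = 10 * P (fc p) (fc q) + 5"
| "fc (BEx t p) = 10 * P (tc t) (fc p) + 6"
| "fc (BAll t p) = 10 * P (tc t) (fc p) + 7"
| "fc (Ex p) = 10 * fc p + 8"
| "fc (All p) = 10 * fc p + 9"

definition FE :: "nat \<Rightarrow> nat \<Rightarrow> nat \<Rightarrow> nat" where "FE f r b = 2 * P (P f r) b"
definition TE :: "nat \<Rightarrow> nat \<Rightarrow> nat \<Rightarrow> nat" where "TE t r v = Suc (2 * P (P t r) v)"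

definition beta :: "nat \<Rightarrow> nat \<Rightarrow> nat \<Rightarrow> nat" where "beta c d j = c mod Suc (Suc j * d)"

definition InW :: "nat \<Rightarrow> nat \<Rightarrow> nat \<Rightarrow> nat \<Rightarrow> bool" where
  "InW c d len y = (\<exists>j<len. beta c d j = y)"

definition JT :: "(nat \<Rightarrow> bool) \<Rightarrow> nat \<Rightarrow> nat \<Rightarrow> nat \<Rightarrow> nat \<Rightarrow> bool" where
 "JT mem c t r v =
 ((\<exists>i\<le>c. t = 5*i \<and> ((r = 0 \<and> v = 0) \<or> (\<exists>x\<le>c. \<exists>r'\<le>c. r = lcons x r' \<and> ((i = 0 \<and> v = x) \<or> (\<exists>i'\<le>c. i = Suc i' \<and> mem (TE (5*i') r' v)))))) \<or>
 (t = 1 \<and> v = 0) \<or>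
 (\<exists>t'\<le>c. t = 5*t' + 2 \<and> (\<exists>v'\<le>c. v = Suc v' \<and> mem (TE t' r v'))) \<or>
 (\<exists>s\<le>c. \<exists>t'\<le>c. t = 5 * P s t' + 3 \<and> (\<exists>v1\<le>c. \<exists>v2\<le>c. v = v1 + v2 \<and> mem (TE s r v1) \<and> mem (TE t' r v2))) \<or>
 (\<exists>s\<le>c. \<exists>t'\<le>c. t = 5 * P s t' + 4 \<and> (\<exists>v1\<le>c. \<exists>v2\<le>c. v = v1 * v2 \<and> mem (TE s r v1) \<and> mem (TE t' r v2))))"

definition JF :: "(nat \<Rightarrow> bool) \<Rightarrow> nat \<Rightarrow> nat \<Rightarrow> nat \<Rightarrow> nat \<Rightarrow> bool" where
 "JF mem c f r b =
 ((\<exists>s\<le>c. \<exists>t\<le>c. f = 10 * P s t \<and> (\<exists>v1\<le>c. \<exists>v2\<le>c. mem (TE s r v1) \<and> mem (TE t r v2) \<and> ((b = 1 \<and> v1 = v2) \<or> (b \<noteq> 1 \<and> v1 \<noteq> v2)))) \<or>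
  (\<exists>s\<le>c. \<exists>t\<le>c. f = 10 * P s t + 1 \<and> (\<exists>v1\<le>c. \<exists>v2\<le>c. mem (TE s r v1) \<and> mem (TE t r v2) \<and> ((b = 1 \<and> v1 < v2) \<or> (b \<noteq> 1 \<and> \<not> v1 < v2)))) \<or>
  (\<exists>i\<le>c. \<exists>t\<le>c. f = 10 * P i t + 2 \<and> b = 0) \<or>
  (\<exists>p\<le>c. f = 10 * p + 3 \<and> ((b = 0 \<and> mem (FE p r 1)) \<or> (b = 1 \<and> mem (FE p r 0)))) \<or>
  (\<exists>p\<le>c. \<exists>q\<le>c. f = 10 * P p q + 4 \<and> ((b = 1 \<and> mem (FE p r 1) \<and> mem (FE q r 1)) \<or> (b = 0 \<and> (mem (FE p r 0) \<or> mem (FE q r 0))))) \<or>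
  (\<exists>p\<le>c. \<exists>q\<le>c. f = 10 * P p q + 5 \<and> ((b = 0 \<and> mem (FE p r 0) \<and> mem (FE q r 0)) \<or> (b = 1 \<and> (mem (FE p r 1) \<or> mem (FE q r 1))))) \<or>
  (\<exists>t\<le>c. \<exists>p\<le>c. f = 10 * P t p + 6 \<and> (\<exists>v\<le>c. mem (TE t r v) \<and> ((b = 1 \<and> (\<exists>x<v. mem (FE p (lcons x r) 1))) \<or> (b = 0 \<and> (\<forall>x<v. mem (FE p (lcons x r) 0)))))) \<or>
  (\<exists>t\<le>c. \<exists>p\<le>c. f = 10 * P t p + 7 \<and> (\<exists>v\<le>c. mem (TE t r v) \<and> ((b = 1 \<and> (\<forall>x<v. mem (FE p (lcons x r) 1))) \<or> (b = 0 \<and> (\<exists>x<v. mem (FE p (lcons x r) 0)))))))"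

definition JustH :: "(nat \<Rightarrow> bool) \<Rightarrow> nat \<Rightarrow> nat \<Rightarrow> bool" where
  "JustH mem c y = ((\<exists>f\<le>c. \<exists>r\<le>c. \<exists>b\<le>c. y = FE f r b \<and> JF mem c f r b) \<or>
                    (\<exists>t\<le>c. \<exists>r\<le>c. \<exists>v\<le>c. y = TE t r v \<and> JT mem c t r v))"

definition GoodH :: "nat \<Rightarrow> nat \<Rightarrow> nat \<Rightarrow> bool" where
  "GoodH c d len = (\<forall>j<len. JustH (InW c d len) c (beta c d j))"

definition PN :: "nt \<Rightarrow> nt \<Rightarrow> nt" where "PN a b = Ad (Mu (Ad a b) (Ad a b)) a"
definition lconsN :: "nt \<Rightarrow> nt \<Rightarrow> nt" where "lconsN x r = S (PN x r)"
definition FEN :: "nt \<Rightarrow> nt \<Rightarrow> nt \<Rightarrow> nt" where "FEN f r b = Mu (numN 2) (PN (PN f r) b)"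
definition TEN :: "nt \<Rightarrow> nt \<Rightarrow> nt \<Rightarrow> nt" where "TEN t r v = S (Mu (numN 2) (PN (PN t r) v))"

lemma evnt_PN[simp]: "evnt r (PN a b) = P (evnt r a) (evnt r b)" by (simp add: PN_def P_def)
lemma evnt_lconsN[simp]: "evnt r (lconsN a b) = lcons (evnt r a) (evnt r b)" by (simp add: lconsN_def lcons_def)
lemma evnt_FEN[simp]: "evnt r (FEN a b c) = FE (evnt r a) (evnt r b) (evnt r c)" by (simp add: FEN_def FE_def)
lemma evnt_TEN[simp]: "evnt r (TEN a b c) = TE (evnt r a) (evnt r b) (evnt r c)" by (simp add: TEN_def TE_def)

definition betaEqN :: "nat \<Rightarrow> nat \<Rightarrow> nat \<Rightarrow> nat \<Rightarrow> nt \<Rightarrow> nf" where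
  "betaEqN q c d j y = NCj (NLt y (S (Mu (S (V j)) (V d))))
      (NBE q (S (V c)) (NEq (V c) (Ad (Mu (V q) (S (Mu (S (V j)) (V d)))) y)))"

lemma beta_iff: "(y < Suc (Suc j * d) \<and> (\<exists>q<Suc c. c = q * Suc (Suc j * d) + y)) \<longleftrightarrow> beta c d j = y"
proof
  assume "y < Suc (Suc j * d) \<and> (\<exists>q<Suc c. c = q * Suc (Suc j * d) + y)"
  then show "beta c d j = y" unfolding beta_def by (metis add.commute mod_mult_self1 mod_less)
next
  assume h: "beta c d j = y"
  let ?m = "Suc (Suc j * d)"
  have "c = (c div ?m) * ?m + y" using h unfolding beta_def by (metis div_mult_mod_eq)
  moreover have "c div ?m < Suc c" by (simp add: le_imp_less_Suc)
  moreover have "y < ?m" using h unfolding beta_def by (metis mod_less_divisor zero_less_Suc)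
  ultimately show "y < Suc (Suc j * d) \<and> (\<exists>q<Suc c. c = q * Suc (Suc j * d) + y)" by blast
qed

definition nvt :: "nt \<Rightarrow> nat set" where "nvt t = {x. \<exists>v r. evnt (r(x:=v)) t \<noteq> evnt r t}"

definition inWN :: "nat \<Rightarrow> nat \<Rightarrow> nat \<Rightarrow> nt \<Rightarrow> nf" where
  "inWN c d len y = NBE 90 (V len) (betaEqN 91 c d 90 y)"


primrec vs :: "nt \<Rightarrow> nat set" where
  "vs (V x) = {x}" | "vs Z = {}" | "vs (S t) = vs t" | "vs (Ad a b) = vs a \<union> vs b" | "vs (Mu a b) = vs a \<union> vs b"

lemma evnt_upd[simp]: "x \<notin> vs t \<Longrightarrow> evnt (r(x:=v)) t = evnt r t"
  by (induction t) auto

lemma vs_numN[simp]: "vs (numN k) = {}" by (induction k) auto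
lemma vs_PN[simp]: "vs (PN a b) = vs a \<union> vs b" by (auto simp: PN_def)
lemma vs_lconsN[simp]: "vs (lconsN a b) = vs a \<union> vs b" by (auto simp: lconsN_def)
lemma vs_FEN[simp]: "vs (FEN a b c) = vs a \<union> vs b \<union> vs c" by (auto simp: FEN_def)
lemma vs_TEN[simp]: "vs (TEN a b c) = vs a \<union> vs b \<union> vs c" by (auto simp: TEN_def)

lemma inWN_sem[simp]: "c < 90 \<Longrightarrow> d < 90 \<Longrightarrow> (\<forall>x\<in>vs y. x < 90) \<Longrightarrow>
   evnf r (inWN c d len y) = InW (r c) (r d) (r len) (evnt r y)"
proof -
  assume a: "c < 90" "d < 90" "\<forall>x\<in>vs y. x < 90"
  then have "90 \<notin> vs y" "91 \<notin> vs y" by auto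
  with a show ?thesis unfolding inWN_def betaEqN_def InW_def
    by (simp add: beta_iff[symmetric] del: less_Suc_eq_le)
qed

definition JTA :: "nat \<Rightarrow> nat \<Rightarrow> nat \<Rightarrow> nat \<Rightarrow> nat \<Rightarrow> nat \<Rightarrow> nf" where
 "JTA c d len t r v =
  NBE 60 (S (V c)) (NCj (NEq (V t) (Mu (numN 5) (V 60))) (NDj (NCj (NEq (V r) Z) (NEq (V v) Z))
     (NBE 61 (S (V c)) (NBE 62 (S (V c)) (NCj (NEq (V r) (lconsN (V 61) (V 62)))
       (NDj (NCj (NEq (V 60) Z) (NEq (V v) (V 61)))
         (NBE 63 (S (V c)) (NCj (NEq (V 60) (S (V 63))) (inWN c d len (TEN (Mu (numN 5) (V 63)) (V 62) (V v)))))))))))"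

definition JTC :: "nat \<Rightarrow> nat \<Rightarrow> nat \<Rightarrow> nat \<Rightarrow> nat \<Rightarrow> nat \<Rightarrow> nf" where
 "JTC c d len t r v = NBE 64 (S (V c)) (NCj (NEq (V t) (Ad (Mu (numN 5) (V 64)) (numN 2)))
      (NBE 65 (S (V c)) (NCj (NEq (V v) (S (V 65))) (inWN c d len (TEN (V 64) (V r) (V 65))))))"

definition JTD :: "bool \<Rightarrow> nat \<Rightarrow> nat \<Rightarrow> nat \<Rightarrow> nat \<Rightarrow> nat \<Rightarrow> nat \<Rightarrow> nf" where
 "JTD m c d len t r v = NBE 66 (S (V c)) (NBE 64 (S (V c)) (NCj (NEq (V t) (Ad (Mu (numN 5) (PN (V 66) (V 64))) (numN (if m then 4 else 3))))
      (NBE 67 (S (V c)) (NBE 68 (S (V c)) (NCj (NEq (V v) (if m then Mu (V 67) (V 68) else Ad (V 67) (V 68)))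
         (NCj (inWN c d len (TEN (V 66) (V r) (V 67))) (inWN c d len (TEN (V 64) (V r) (V 68)))))))))"

definition JTN :: "nat \<Rightarrow> nat \<Rightarrow> nat \<Rightarrow> nat \<Rightarrow> nat \<Rightarrow> nat \<Rightarrow> nf" where
 "JTN c d len t r v = NDj (JTA c d len t r v) (NDj (NCj (NEq (V t) (S Z)) (NEq (V v) Z))
    (NDj (JTC c d len t r v) (NDj (JTD False c d len t r v) (JTD True c d len t r v))))"

lemma JTN_sem: "evnf r (JTN 11 12 13 25 26 27) = JT (InW (r 11) (r 12) (r 13)) (r 11) (r 25) (r 26) (r 27)"
  unfolding JTN_def JT_def JTA_def JTC_def JTD_def
  by (simp del: less_Suc_eq_le add: less_Suc_eq_le[symmetric])

definition JF1 :: "nat \<Rightarrow> nf \<Rightarrow> nat \<Rightarrow> nat \<Rightarrow> nat \<Rightarrow> nat \<Rightarrow> nat \<Rightarrow> nat \<Rightarrow> nf" where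
 "JF1 k REL c d len f r b = NBE 60 (S (V c)) (NBE 61 (S (V c)) (NCj (NEq (V f) (Ad (Mu (numN 10) (PN (V 60) (V 61))) (numN k)))
   (NBE 62 (S (V c)) (NBE 63 (S (V c)) (NCj (inWN c d len (TEN (V 60) (V r) (V 62)))
     (NCj (inWN c d len (TEN (V 61) (V r) (V 63))) (NDj (NCj (NEq (V b) (numN 1)) REL) (NCj (NNeg (NEq (V b) (numN 1))) (NNeg REL)))))))))"

definition JF3 :: "nat \<Rightarrow> nat \<Rightarrow> nat \<Rightarrow> nat \<Rightarrow> nat \<Rightarrow> nat \<Rightarrow> nf" where
 "JF3 c d len f r b = NBE 64 (S (V c)) (NBE 61 (S (V c)) (NCj (NEq (V f) (Ad (Mu (numN 10) (PN (V 64) (V 61))) (numN 2))) (NEq (V b) Z)))"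

definition JF4 :: "nat \<Rightarrow> nat \<Rightarrow> nat \<Rightarrow> nat \<Rightarrow> nat \<Rightarrow> nat \<Rightarrow> nf" where
 "JF4 c d len f r b = NBE 65 (S (V c)) (NCj (NEq (V f) (Ad (Mu (numN 10) (V 65)) (numN 3)))
    (NDj (NCj (NEq (V b) Z) (inWN c d len (FEN (V 65) (V r) (numN 1)))) (NCj (NEq (V b) (numN 1)) (inWN c d len (FEN (V 65) (V r) Z)))))"

definition JF5 :: "nat \<Rightarrow> nat \<Rightarrow> nat \<Rightarrow> nat \<Rightarrow> nat \<Rightarrow> nat \<Rightarrow> nat \<Rightarrow> nat \<Rightarrow> nat \<Rightarrow> nf" where
 "JF5 k a ov c d len f r b = NBE 65 (S (V c)) (NBE 66 (S (V c)) (NCj (NEq (V f) (Ad (Mu (numN 10) (PN (V 65) (V 66))) (numN k)))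
    (NDj (NCj (NEq (V b) (numN a)) (NCj (inWN c d len (FEN (V 65) (V r) (numN a))) (inWN c d len (FEN (V 66) (V r) (numN a)))))
         (NCj (NEq (V b) (numN ov)) (NDj (inWN c d len (FEN (V 65) (V r) (numN ov))) (inWN c d len (FEN (V 66) (V r) (numN ov))))))))"

definition JF7 :: "nat \<Rightarrow> bool \<Rightarrow> nat \<Rightarrow> nat \<Rightarrow> nat \<Rightarrow> nat \<Rightarrow> nat \<Rightarrow> nat \<Rightarrow> nf" where
 "JF7 k ex c d len f r b = NBE 61 (S (V c)) (NBE 65 (S (V c)) (NCj (NEq (V f) (Ad (Mu (numN 10) (PN (V 61) (V 65))) (numN k)))
   (NBE 67 (S (V c)) (NCj (inWN c d len (TEN (V 61) (V r) (V 67)))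
     (NDj (NCj (NEq (V b) (numN 1)) ((if ex then NBE else NBA) 68 (V 67) (inWN c d len (FEN (V 65) (lconsN (V 68) (V r)) (numN 1)))))
          (NCj (NEq (V b) Z) ((if ex then NBA else NBE) 68 (V 67) (inWN c d len (FEN (V 65) (lconsN (V 68) (V r)) Z)))))))))"

definition JFN :: "nat \<Rightarrow> nat \<Rightarrow> nat \<Rightarrow> nat \<Rightarrow> nat \<Rightarrow> nat \<Rightarrow> nf" where
 "JFN c d len f r b = NDj (JF1 0 (NEq (V 62) (V 63)) c d len f r b) (NDj (JF1 1 (NLt (V 62) (V 63)) c d len f r b)
   (NDj (JF3 c d len f r b) (NDj (JF4 c d len f r b) (NDj (JF5 4 1 0 c d len f r b) (NDj (JF5 5 0 1 c d len f r b)
   (NDj (JF7 6 True c d len f r b) (JF7 7 False c d len f r b)))))))"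

lemma JFN_sem: "evnf r (JFN 11 12 13 22 23 24) = JF (InW (r 11) (r 12) (r 13)) (r 11) (r 22) (r 23) (r 24)"
  unfolding JFN_def JF_def JF1_def JF3_def JF4_def JF5_def JF7_def
  by (simp del: less_Suc_eq_le add: less_Suc_eq_le[symmetric])

definition JustN :: "nat \<Rightarrow> nat \<Rightarrow> nat \<Rightarrow> nat \<Rightarrow> nf" where
 "JustN c d len y = NDj (NBE 22 (S (V c)) (NBE 23 (S (V c)) (NBE 24 (S (V c)) (NCj (NEq (V y) (FEN (V 22) (V 23) (V 24))) (JFN c d len 22 23 24)))))
   (NBE 25 (S (V c)) (NBE 26 (S (V c)) (NBE 27 (S (V c)) (NCj (NEq (V y) (TEN (V 25) (V 26) (V 27))) (JTN c d len 25 26 27)))))"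

definition GoodN :: "nat \<Rightarrow> nat \<Rightarrow> nat \<Rightarrow> nf" where
 "GoodN c d len = NBA 20 (V len) (NBA 21 (S (V c)) (NDj (NNeg (betaEqN 28 c d 20 (V 21))) (JustN c d len 21)))"

lemma beta_le: "beta c d j \<le> c" by (simp add: beta_def)

lemma GoodN_sem: "evnf r (GoodN 11 12 13) = GoodH (r 11) (r 12) (r 13)"
proof -
  have "evnf r (GoodN 11 12 13) = (\<forall>j<r 13. \<forall>y\<le>r 11. beta (r 11) (r 12) j = y \<longrightarrow> JustH (InW (r 11) (r 12) (r 13)) (r 11) y)"
    unfolding GoodN_def JustN_def betaEqN_def JustH_def
    apply (simp del: less_Suc_eq_le add: less_Suc_eq_le[symmetric] JFN_sem JTN_sem beta_iff[symmetric])
    by blast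
  then show ?thesis unfolding GoodH_def using beta_le by auto
qed

definition BaseN :: nf where
 "BaseN = NBE 10 (S (V 0)) (NBE 11 (S (V 0)) (NBE 12 (S (V 0)) (NBE 13 (S (V 0))
    (NCj (GoodN 11 12 13) (inWN 11 12 13 (FEN (V 1) (lconsN (V 10) (V 2)) Z))))))"

definition BaseSem :: "nat \<Rightarrow> nat \<Rightarrow> nat \<Rightarrow> bool" where
  "BaseSem z D R = (\<exists>x\<le>z. \<exists>c\<le>z. \<exists>d\<le>z. \<exists>len\<le>z. GoodH c d len \<and> InW c d len (FE D (lcons x R) 0))"

lemma BaseN_sem: "evnf r BaseN = BaseSem (r 0) (r 1) (r 2)"
  unfolding BaseN_def BaseSem_def
  by (simp del: less_Suc_eq_le add: less_Suc_eq_le[symmetric] GoodN_sem)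


lemma FE_TE_neq[simp]: "FE f r b \<noteq> TE t r' v" "TE t r' v \<noteq> FE f r b"
  unfolding FE_def TE_def by presburger+

lemma FE_eq[simp]: "FE f r b = FE f' r' b' \<longleftrightarrow> f = f' \<and> r = r' \<and> b = b'"
  unfolding FE_def by auto
lemma TE_eq[simp]: "TE f r b = TE f' r' b' \<longleftrightarrow> f = f' \<and> r = r' \<and> b = b'"
  unfolding TE_def by auto

lemma Good_Just: "GoodH c d len \<Longrightarrow> InW c d len y \<Longrightarrow> JustH (InW c d len) c y"
  unfolding GoodH_def InW_def by auto

lemma JustH_FE: "JustH mem c (FE f r b) \<Longrightarrow> JF mem c f r b"
  unfolding JustH_def by auto
lemma JustH_TE: "JustH mem c (TE t r v) \<Longrightarrow> JT mem c t r v"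
  unfolding JustH_def by auto

lemma JT_Var_E: "JT mem c (5*i) r v \<Longrightarrow> (r = 0 \<and> v = 0) \<or> (\<exists>x r'. r = lcons x r' \<and> ((i = 0 \<and> v = x) \<or> (\<exists>i'. i = Suc i' \<and> mem (TE (5*i') r' v))))"
  unfolding JT_def by (elim disjE; (elim exE conjE)?; auto; presburger)
lemma JT_Zero_E: "JT mem c 1 r v \<Longrightarrow> v = 0"
  unfolding JT_def by (elim disjE; (elim exE conjE)?; auto; presburger)
lemma JT_Sc_E: "JT mem c (5*t+2) r v \<Longrightarrow> \<exists>v'. v = Suc v' \<and> mem (TE t r v')"
  unfolding JT_def by (elim disjE; (elim exE conjE)?; auto; presburger)
lemma JT_Pl_E: "JT mem c (5*P s t+3) r v \<Longrightarrow> \<exists>v1 v2. v = v1 + v2 \<and> mem (TE s r v1) \<and> mem (TE t r v2)"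
  unfolding JT_def by (elim disjE; (elim exE conjE)?; auto; presburger)
lemma JT_Tm_E: "JT mem c (5*P s t+4) r v \<Longrightarrow> \<exists>v1 v2. v = v1 * v2 \<and> mem (TE s r v1) \<and> mem (TE t r v2)"
  unfolding JT_def by (elim disjE; (elim exE conjE)?; auto; presburger)

lemma JF_Eq_E: "JF mem c (10*P s t) r b \<Longrightarrow> \<exists>v1 v2. mem (TE s r v1) \<and> mem (TE t r v2) \<and> ((b = 1 \<and> v1 = v2) \<or> (b \<noteq> 1 \<and> v1 \<noteq> v2))"
  unfolding JF_def by (elim disjE; (elim exE conjE)?; auto; presburger)
lemma JF_Lt_E: "JF mem c (10*P s t+1) r b \<Longrightarrow> \<exists>v1 v2. mem (TE s r v1) \<and> mem (TE t r v2) \<and> ((b = 1 \<and> v1 < v2) \<or> (b \<noteq> 1 \<and> \<not> v1 < v2))"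
  unfolding JF_def by (elim disjE; (elim exE conjE)?; auto; presburger)
lemma JF_Mem_E: "JF mem c (10*P i t+2) r b \<Longrightarrow> b = 0"
  unfolding JF_def by (elim disjE; (elim exE conjE)?; auto; presburger)
lemma JF_Neg_E: "JF mem c (10*p+3) r b \<Longrightarrow> (b = 0 \<and> mem (FE p r 1)) \<or> (b = 1 \<and> mem (FE p r 0))"
  unfolding JF_def by (elim disjE; (elim exE conjE)?; auto; presburger)
lemma JF_Conj_E: "JF mem c (10*P p q+4) r b \<Longrightarrow> (b = 1 \<and> mem (FE p r 1) \<and> mem (FE q r 1)) \<or> (b = 0 \<and> (mem (FE p r 0) \<or> mem (FE q r 0)))"
  unfolding JF_def by (elim disjE; (elim exE conjE)?; auto; presburger)
lemma JF_Disj_E: "JF mem c (10*P p q+5) r b \<Longrightarrow> (b = 0 \<and> mem (FE p r 0) \<and> mem (FE q r 0)) \<or> (b = 1 \<and> (mem (FE p r 1) \<or> mem (FE q r 1)))"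
  unfolding JF_def by (elim disjE; (elim exE conjE)?; auto; presburger)
lemma JF_BEx_E: "JF mem c (10*P t p+6) r b \<Longrightarrow> \<exists>v. mem (TE t r v) \<and> ((b = 1 \<and> (\<exists>x<v. mem (FE p (lcons x r) 1))) \<or> (b = 0 \<and> (\<forall>x<v. mem (FE p (lcons x r) 0))))"
  unfolding JF_def by (elim disjE; (elim exE conjE)?; auto; presburger)
lemma JF_BAll_E: "JF mem c (10*P t p+7) r b \<Longrightarrow> \<exists>v. mem (TE t r v) \<and> ((b = 1 \<and> (\<forall>x<v. mem (FE p (lcons x r) 1))) \<or> (b = 0 \<and> (\<exists>x<v. mem (FE p (lcons x r) 0))))"
  unfolding JF_def by (elim disjE; (elim exE conjE)?; auto; presburger)
lemma JF_Ex_E: "JF mem c (10*p+8) r b \<Longrightarrow> False"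
  unfolding JF_def by (elim disjE; (elim exE conjE)?; auto; presburger)
lemma JF_All_E: "JF mem c (10*p+9) r b \<Longrightarrow> False"
  unfolding JF_def by (elim disjE; (elim exE conjE)?; auto; presburger)

lemma lcons_ne0[simp]: "lcons x r \<noteq> 0" "0 \<noteq> lcons x r" by (auto simp: lcons_def)
lemma lcons_eq[simp]: "lcons x r = lcons x' r' \<longleftrightarrow> x = x' \<and> r = r'" by (auto simp: lcons_def)

lemma var_sound: "GoodH c d len \<Longrightarrow> InW c d len (TE (5*i) (lc xs) v) \<Longrightarrow> envl xs i = v"
proof (induction i arbitrary: xs v)
  case 0
  then have "JT (InW c d len) c (5*0) (lc xs) v" using Good_Just JustH_TE by blast
  from JT_Var_E[OF this] show ?case by (cases xs) (auto simp: envl_def)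
next
  case (Suc i)
  then have "JT (InW c d len) c (5*Suc i) (lc xs) v" using Good_Just JustH_TE by blast
  from JT_Var_E[OF this] show ?case
  proof (cases xs)
    case Nil then show ?thesis using JT_Var_E[OF \<open>JT _ _ _ _ _\<close>] by (auto simp: envl_def)
  next
    case (Cons y ys)
    then have "InW c d len (TE (5*i) (lc ys) v)" using JT_Var_E[OF \<open>JT _ _ _ _ _\<close>] by auto
    then have "envl ys i = v" using Suc by blast
    then show ?thesis using Cons by (auto simp: envl_def split: if_splits)
  qed
qed

lemma term_sound: "GoodH c d len \<Longrightarrow> InW c d len (TE (tc t) (lc xs) v) \<Longrightarrow> evt (envl xs) t = v"
proof (induction t arbitrary: v)
  case (Var i) then show ?case using var_sound by simp
next
  case Zero then show ?case using Good_Just JustH_TE JT_Zero_E by fastforce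
next
  case (Sc t)
  then have "JT (InW c d len) c (5 * tc t + 2) (lc xs) v" using Good_Just JustH_TE by fastforce
  from JT_Sc_E[OF this] Sc show ?case by auto
next
  case (Pl a b)
  then have "JT (InW c d len) c (5 * P (tc a) (tc b) + 3) (lc xs) v" using Good_Just JustH_TE by fastforce
  from JT_Pl_E[OF this] Pl show ?case by auto
next
  case (Tm a b)
  then have "JT (InW c d len) c (5 * P (tc a) (tc b) + 4) (lc xs) v" using Good_Just JustH_TE by fastforce
  from JT_Tm_E[OF this] Tm show ?case by auto
qed

abbreviation X0 :: "nat \<Rightarrow> nat \<Rightarrow> bool" where "X0 \<equiv> (\<lambda>_ _. False)"

lemma lc_cons: "lcons x (lc xs) = lc (x # xs)" by simp

lemma form_sound: "GoodH c d len \<Longrightarrow> b \<le> 1 \<Longrightarrow> InW c d len (FE (fc p) (lc xs) b) \<Longrightarrow> (evf (envl xs) X0 p \<longleftrightarrow> b = 1)"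
proof (induction p arbitrary: xs b)
  case (Eq s t)
  then have "JF (InW c d len) c (10 * P (tc s) (tc t)) (lc xs) b" using Good_Just JustH_FE by fastforce
  from JF_Eq_E[OF this] obtain v1 v2 where h: "InW c d len (TE (tc s) (lc xs) v1)" "InW c d len (TE (tc t) (lc xs) v2)"
     "(b = 1 \<and> v1 = v2) \<or> (b \<noteq> 1 \<and> \<not> v1 = v2)" by blast
  from term_sound[OF Eq.prems(1) h(1)] term_sound[OF Eq.prems(1) h(2)] h(3) show ?case by auto
next
  case (Lt s t)
  then have "JF (InW c d len) c (10 * P (tc s) (tc t) + 1) (lc xs) b" using Good_Just JustH_FE by fastforce
  from JF_Lt_E[OF this] obtain v1 v2 where h: "InW c d len (TE (tc s) (lc xs) v1)" "InW c d len (TE (tc t) (lc xs) v2)"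
     "(b = 1 \<and> v1 < v2) \<or> (b \<noteq> 1 \<and> \<not> v1 < v2)" by blast
  from term_sound[OF Lt.prems(1) h(1)] term_sound[OF Lt.prems(1) h(2)] h(3) show ?case by auto
next
  case (Mem i t)
  then have "JF (InW c d len) c (10 * P i (tc t) + 2) (lc xs) b" using Good_Just JustH_FE by fastforce
  from JF_Mem_E[OF this] Mem show ?case by auto
next
  case (Neg p)
  then have "JF (InW c d len) c (10 * fc p + 3) (lc xs) b" using Good_Just JustH_FE by fastforce
  moreover have IH: "\<And>b'. b' \<le> 1 \<Longrightarrow> InW c d len (FE (fc p) (lc xs) b') \<Longrightarrow> (evf (envl xs) X0 p \<longleftrightarrow> b' = 1)"
    using Neg.IH Neg.prems(1) by blast
  ultimately show ?case using JF_Neg_E by fastforce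
next
  case (Conj p q)
  then have "JF (InW c d len) c (10 * P (fc p) (fc q) + 4) (lc xs) b" using Good_Just JustH_FE by fastforce
  moreover have IH1: "\<And>b'. b' \<le> 1 \<Longrightarrow> InW c d len (FE (fc p) (lc xs) b') \<Longrightarrow> (evf (envl xs) X0 p \<longleftrightarrow> b' = 1)"
    using Conj.IH(1) Conj.prems(1) by blast
  moreover have IH2: "\<And>b'. b' \<le> 1 \<Longrightarrow> InW c d len (FE (fc q) (lc xs) b') \<Longrightarrow> (evf (envl xs) X0 q \<longleftrightarrow> b' = 1)"
    using Conj.IH(2) Conj.prems(1) by blast
  ultimately show ?case using JF_Conj_E[of "InW c d len"] by (smt (verit) evf.simps zero_neq_one le_numeral_extra(4) zero_le)
next
  case (Disj p q)
  then have "JF (InW c d len) c (10 * P (fc p) (fc q) + 5) (lc xs) b" using Good_Just JustH_FE by fastforce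
  moreover have IH1: "\<And>b'. b' \<le> 1 \<Longrightarrow> InW c d len (FE (fc p) (lc xs) b') \<Longrightarrow> (evf (envl xs) X0 p \<longleftrightarrow> b' = 1)"
    using Disj.IH(1) Disj.prems(1) by blast
  moreover have IH2: "\<And>b'. b' \<le> 1 \<Longrightarrow> InW c d len (FE (fc q) (lc xs) b') \<Longrightarrow> (evf (envl xs) X0 q \<longleftrightarrow> b' = 1)"
    using Disj.IH(2) Disj.prems(1) by blast
  ultimately show ?case using JF_Disj_E[of "InW c d len"] by (smt (verit) evf.simps zero_neq_one le_numeral_extra(4) zero_le)
next
  case (BEx t p)
  then have "JF (InW c d len) c (10 * P (tc t) (fc p) + 6) (lc xs) b" using Good_Just JustH_FE by fastforce
  from JF_BEx_E[OF this] obtain v where v: "InW c d len (TE (tc t) (lc xs) v)"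
    and h: "(b = 1 \<and> (\<exists>x<v. InW c d len (FE (fc p) (lc (x # xs)) 1))) \<or> (b = 0 \<and> (\<forall>x<v. InW c d len (FE (fc p) (lc (x # xs)) 0)))"
    by auto
  have ev: "evt (envl xs) t = v" using term_sound[OF BEx.prems(1) v] .
  have IH: "InW c d len (FE (fc p) (lc (x # xs)) b') \<Longrightarrow> b' \<le> 1 \<Longrightarrow> (evf (case_nat x (envl xs)) X0 p \<longleftrightarrow> b' = 1)" for x b'
    using BEx.IH[OF BEx.prems(1), of b' "x # xs"] by (simp add: envl_cons)
  show ?case using h ev IH by (smt (verit) evf.simps zero_neq_one le_numeral_extra(4) zero_le)
next
  case (BAll t p)
  then have "JF (InW c d len) c (10 * P (tc t) (fc p) + 7) (lc xs) b" using Good_Just JustH_FE by fastforce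
  from JF_BAll_E[OF this] obtain v where v: "InW c d len (TE (tc t) (lc xs) v)"
    and h: "(b = 1 \<and> (\<forall>x<v. InW c d len (FE (fc p) (lc (x # xs)) 1))) \<or> (b = 0 \<and> (\<exists>x<v. InW c d len (FE (fc p) (lc (x # xs)) 0)))"
    by auto
  have ev: "evt (envl xs) t = v" using term_sound[OF BAll.prems(1) v] .
  have IH: "InW c d len (FE (fc p) (lc (x # xs)) b') \<Longrightarrow> b' \<le> 1 \<Longrightarrow> (evf (case_nat x (envl xs)) X0 p \<longleftrightarrow> b' = 1)" for x b'
    using BAll.IH[OF BAll.prems(1), of b' "x # xs"] by (simp add: envl_cons)
  show ?case using h ev IH by (smt (verit) evf.simps zero_neq_one le_numeral_extra(4) zero_le)
next
  case (Ex p)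
  then have "JF (InW c d len) c (10 * fc p + 8) (lc xs) b" using Good_Just JustH_FE by fastforce
  from JF_Ex_E[OF this] show ?case ..
next
  case (All p)
  then have "JF (InW c d len) c (10 * fc p + 9) (lc xs) b" using Good_Just JustH_FE by fastforce
  from JF_All_E[OF this] show ?case ..
qed


lemma TE_ge: "t \<le> TE t r v" "r \<le> TE t r v" "v \<le> TE t r v"
  unfolding TE_def using P_ge1 P_ge2 le_trans by (metis le_SucI mult_2 trans_le_add1)+
lemma FE_ge: "f \<le> FE f r b" "r \<le> FE f r b" "b \<le> FE f r b"
  unfolding FE_def using P_ge1 P_ge2 le_trans by (metis mult_2 trans_le_add1)+
lemma lcons_ge: "x \<le> lcons x r" "r \<le> lcons x r"
  unfolding lcons_def using P_ge1 P_ge2 le_SucI by blast+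

lemma JT_Var0_nil: "i \<le> c \<Longrightarrow> JT mem c (5*i) 0 0" unfolding JT_def by auto
lemma JT_Var0_cons: "x \<le> c \<Longrightarrow> r' \<le> c \<Longrightarrow> JT mem c 0 (lcons x r') x" unfolding JT_def by auto
lemma JT_VarS: "Suc i \<le> c \<Longrightarrow> x \<le> c \<Longrightarrow> r' \<le> c \<Longrightarrow> mem (TE (5*i) r' v) \<Longrightarrow> JT mem c (5*Suc i) (lcons x r') v"
  unfolding JT_def by (intro disjI1 bexI[of _ "Suc i"]) auto
lemma JT_Zero: "JT mem c 1 r 0" unfolding JT_def by auto
lemma JT_Sc: "t \<le> c \<Longrightarrow> v \<le> c \<Longrightarrow> mem (TE t r v) \<Longrightarrow> JT mem c (5*t+2) r (Suc v)"
  unfolding JT_def by auto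
lemma JT_Pl: "s \<le> c \<Longrightarrow> t \<le> c \<Longrightarrow> v1 \<le> c \<Longrightarrow> v2 \<le> c \<Longrightarrow> mem (TE s r v1) \<Longrightarrow> mem (TE t r v2) \<Longrightarrow> JT mem c (5*P s t+3) r (v1+v2)"
  unfolding JT_def by blast
lemma JT_Tm: "s \<le> c \<Longrightarrow> t \<le> c \<Longrightarrow> v1 \<le> c \<Longrightarrow> v2 \<le> c \<Longrightarrow> mem (TE s r v1) \<Longrightarrow> mem (TE t r v2) \<Longrightarrow> JT mem c (5*P s t+4) r (v1*v2)"
  unfolding JT_def by blast

abbreviation bv :: "bool \<Rightarrow> nat" where "bv B \<equiv> (if B then 1 else 0)"

lemma JF_Eq: "s \<le> c \<Longrightarrow> t \<le> c \<Longrightarrow> v1 \<le> c \<Longrightarrow> v2 \<le> c \<Longrightarrow> mem (TE s r v1) \<Longrightarrow> mem (TE t r v2) \<Longrightarrow> JF mem c (10*P s t) r (bv (v1 = v2))"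
  unfolding JF_def by (intro disjI1) auto
lemma JF_Lt: "s \<le> c \<Longrightarrow> t \<le> c \<Longrightarrow> v1 \<le> c \<Longrightarrow> v2 \<le> c \<Longrightarrow> mem (TE s r v1) \<Longrightarrow> mem (TE t r v2) \<Longrightarrow> JF mem c (10*P s t+1) r (bv (v1 < v2))"
  unfolding JF_def by (intro disjI2 disjI1) auto
lemma JF_Mem: "i \<le> c \<Longrightarrow> t \<le> c \<Longrightarrow> JF mem c (10*P i t+2) r 0"
  unfolding JF_def by (intro disjI2 disjI1) auto
lemma JF_Neg: "p \<le> c \<Longrightarrow> mem (FE p r (bv B)) \<Longrightarrow> JF mem c (10*p+3) r (bv (\<not> B))"
  unfolding JF_def by (intro disjI2 disjI1) auto
lemma JF_Conj: "p \<le> c \<Longrightarrow> q \<le> c \<Longrightarrow> mem (FE p r (bv B1)) \<Longrightarrow> mem (FE q r (bv B2)) \<Longrightarrow> JF mem c (10*P p q+4) r (bv (B1 \<and> B2))"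
  unfolding JF_def by (intro disjI2 disjI1) auto
lemma JF_Disj: "p \<le> c \<Longrightarrow> q \<le> c \<Longrightarrow> mem (FE p r (bv B1)) \<Longrightarrow> mem (FE q r (bv B2)) \<Longrightarrow> JF mem c (10*P p q+5) r (bv (B1 \<or> B2))"
  unfolding JF_def by (intro disjI2 disjI1) auto
lemma JF_BEx: assumes "t \<le> c" "p \<le> c" "v \<le> c" "mem (TE t r v)" "(\<forall>x<v. mem (FE p (lcons x r) (bv (B x))))"
  shows "JF mem c (10*P t p+6) r (bv (\<exists>x<v. B x))"
proof -
  have key: "(bv (\<exists>x<v. B x) = 1 \<and> (\<exists>x<v. mem (FE p (lcons x r) 1))) \<or> (bv (\<exists>x<v. B x) = 0 \<and> (\<forall>x<v. mem (FE p (lcons x r) 0)))"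
  proof (cases "\<exists>x<v. B x")
    case True
    then obtain x where x: "x < v" "B x" by blast
    then have "mem (FE p (lcons x r) 1)" using assms(5) by force
    then show ?thesis using x True by auto
  next
    case False then show ?thesis using assms(5) by auto
  qed
  show ?thesis unfolding JF_def using assms(1-4) key by blast
qed

lemma JF_BAll: assumes "t \<le> c" "p \<le> c" "v \<le> c" "mem (TE t r v)" "(\<forall>x<v. mem (FE p (lcons x r) (bv (B x))))"
  shows "JF mem c (10*P t p+7) r (bv (\<forall>x<v. B x))"
proof -
  have key: "(bv (\<forall>x<v. B x) = 1 \<and> (\<forall>x<v. mem (FE p (lcons x r) 1))) \<or> (bv (\<forall>x<v. B x) = 0 \<and> (\<exists>x<v. mem (FE p (lcons x r) 0)))"
  proof (cases "\<forall>x<v. B x")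
    case False
    then obtain x where x: "x < v" "\<not> B x" by blast
    then have "mem (FE p (lcons x r) 0)" using assms(5) by force
    then show ?thesis using x False by auto
  next
    case True then show ?thesis using assms(5) by auto
  qed
  show ?thesis unfolding JF_def using assms(1-4) key by blast
qed


lemma coprime_moduli:
  assumes "i < j" "j \<le> N" "d = fact N"
  shows "coprime (Suc (Suc i * d)) (Suc (Suc j * d))"
proof (rule ccontr)
  assume "\<not> coprime (Suc (Suc i * d)) (Suc (Suc j * d))"
  then obtain g where g: "g dvd Suc (Suc i * d)" "g dvd Suc (Suc j * d)" "\<not> is_unit g"
    by (rule not_coprimeE)
  then have "g \<noteq> 1" by auto
  then obtain p where p: "prime p" "p dvd g" using prime_factor_nat by blast
  have p1: "p dvd Suc (Suc i * d)" "p dvd Suc (Suc j * d)" using p g dvd_trans by blast+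
  have ndd: "\<not> p dvd d"
  proof
    assume "p dvd d"
    then have "p dvd Suc i * d" by simp
    with p1(1) have "p dvd 1" by (metis dvd_add_right_iff plus_1_eq_Suc add.commute)
    with p(1) show False by simp
  qed
  have "Suc (Suc j * d) = Suc (Suc i * d) + (j - i) * d"
    using assms(1) by (simp add: algebra_simps diff_mult_distrib) 
  then have "p dvd (j - i) * d" using p1 by (metis dvd_add_right_iff)
  then have "p dvd (j - i)" using ndd p(1) prime_dvd_mult_iff by blast
  then have "p \<le> j - i" using assms(1) by (simp add: dvd_imp_le)
  then have "p \<le> N" using assms by linarith
  moreover have "1 \<le> p" using p(1) prime_ge_1_nat by blast
  ultimately have "p dvd d" using assms(3) dvd_fact by blast
  with ndd show False ..
qed

lemma beta_exists: "\<exists>c d. \<forall>j<length L. beta c d j = L ! j"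
proof -
  define N where "N = length L + sum_list L + 1"
  define d where "d = (fact N :: nat)"
  have "\<exists>x. \<forall>j\<in>{..<length L}. [x = L ! j] (mod Suc (Suc j * d))"
  proof (rule chinese_remainder_nat)
    show "\<forall>i\<in>{..<length L}. \<forall>j\<in>{..<length L}. i \<noteq> j \<longrightarrow> coprime (Suc (Suc i * d)) (Suc (Suc j * d))"
    proof (intro ballI impI)
      fix i j assume ij: "i \<in> {..<length L}" "j \<in> {..<length L}" "i \<noteq> j"
      show "coprime (Suc (Suc i * d)) (Suc (Suc j * d))"
      proof (cases "i < j")
        case True then show ?thesis using coprime_moduli[of i j N d] ij by (simp add: N_def d_def)
      next
        case False then have "j < i" using ij by simp
        then show ?thesis using coprime_moduli[of j i N d] ij by (simp add: N_def d_def coprime_commute)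
      qed
    qed
  qed simp
  then obtain x where x: "\<forall>j<length L. [x = L ! j] (mod Suc (Suc j * d))" by auto
  have "beta x d j = L ! j" if "j < length L" for j
  proof -
    have "L ! j \<le> sum_list L" using that by (metis elem_le_sum_list)
    then have "L ! j < N" by (simp add: N_def)
    also have "N \<le> d" by (simp add: d_def fact_ge_self)
    finally have "L ! j < Suc (Suc j * d)" by simp
    then show ?thesis using x that by (simp add: beta_def cong_def)
  qed
  then show ?thesis by blast
qed


fun vneed :: "nat \<Rightarrow> nat list \<Rightarrow> nat list" where
  "vneed i [] = [TE (5*i) 0 0]"
| "vneed 0 (x # xs) = [TE 0 (lc (x # xs)) x]"
| "vneed (Suc i) (x # xs) = TE (5 * Suc i) (lc (x # xs)) (envl xs i) # vneed i xs"

primrec tneed :: "trm \<Rightarrow> nat list \<Rightarrow> nat list" where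
  "tneed (Var i) xs = vneed i xs"
| "tneed Zero xs = [TE 1 (lc xs) 0]"
| "tneed (Sc t) xs = TE (tc (Sc t)) (lc xs) (evt (envl xs) (Sc t)) # tneed t xs"
| "tneed (Pl a b) xs = TE (tc (Pl a b)) (lc xs) (evt (envl xs) (Pl a b)) # tneed a xs @ tneed b xs"
| "tneed (Tm a b) xs = TE (tc (Tm a b)) (lc xs) (evt (envl xs) (Tm a b)) # tneed a xs @ tneed b xs"

lemma vneed_hd: "TE (5*i) (lc xs) (envl xs i) \<in> set (vneed i xs)"
  by (cases "(i, xs)" rule: vneed.cases) (simp_all add: envl_def)

lemma tneed_hd: "TE (tc t) (lc xs) (evt (envl xs) t) \<in> set (tneed t xs)"
  by (cases t) (simp_all add: vneed_hd)

lemma TE_le: "TE t r v \<le> c \<Longrightarrow> t \<le> c \<and> r \<le> c \<and> v \<le> c"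
  using TE_ge[where t=t and r=r and v=v] by linarith
lemma FE_le: "FE t r v \<le> c \<Longrightarrow> t \<le> c \<and> r \<le> c \<and> v \<le> c"
  using FE_ge[where f=t and r=r and b=v] by linarith
lemma P_le: "P a b \<le> c \<Longrightarrow> a \<le> c \<and> b \<le> c"
  using P_ge1[where a=a and b=b] P_ge2[where a=a and b=b] by linarith
lemma lcons_le: "lcons a b \<le> c \<Longrightarrow> a \<le> c \<and> b \<le> c"
  using lcons_ge[where x=a and r=b] by linarith

lemma JustH_TEI: "TE t r v \<le> c \<Longrightarrow> JT mem c t r v \<Longrightarrow> JustH mem c (TE t r v)"
  unfolding JustH_def by (drule TE_le) blast
lemma JustH_FEI: "FE f r b \<le> c \<Longrightarrow> JF mem c f r b \<Longrightarrow> JustH mem c (FE f r b)"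
  unfolding JustH_def by (drule FE_le) blast

lemma vneed_just: "set (vneed i xs) \<subseteq> M \<Longrightarrow> \<forall>y\<in>M. y \<le> c \<Longrightarrow> y \<in> set (vneed i xs) \<Longrightarrow> JustH (\<lambda>y. y \<in> M) c y"
proof (induction i xs rule: vneed.induct)
  case (1 i)
  then have le: "TE (5*i) 0 0 \<le> c" by auto
  then have "i \<le> c" using TE_le[OF le] by linarith
  then show ?case using 1 le by (auto intro!: JustH_TEI JT_Var0_nil)
next
  case (2 x xs)
  then have le: "TE 0 (lc (x # xs)) x \<le> c" by auto
  then have "lcons x (lc xs) \<le> c" "x \<le> c" using TE_le[OF le] by auto
  then have "x \<le> c" "lc xs \<le> c" using lcons_le[of x "lc xs" c] by simp_all
  then show ?case using 2 le by (auto intro!: JustH_TEI JT_Var0_cons)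
next
  case (3 i x xs)
  let ?y = "TE (5 * Suc i) (lc (x # xs)) (envl xs i)"
  have le: "?y \<le> c" using 3 by auto
  then have "5 * Suc i \<le> c" "lcons x (lc xs) \<le> c" using TE_le[OF le] by auto
  then have "Suc i \<le> c" "x \<le> c" "lc xs \<le> c" using lcons_le[of x "lc xs" c] by simp_all
  moreover have "TE (5*i) (lc xs) (envl xs i) \<in> M" using 3(2) vneed_hd by auto
  ultimately have "JustH (\<lambda>y. y \<in> M) c ?y" using le
    by (auto intro!: JustH_TEI JT_VarS simp del: mult_Suc_right)
  then show ?case using 3 by auto
qed

lemma tneed_just: "set (tneed t xs) \<subseteq> M \<Longrightarrow> \<forall>y\<in>M. y \<le> c \<Longrightarrow> y \<in> set (tneed t xs) \<Longrightarrow> JustH (\<lambda>y. y \<in> M) c y"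
proof (induction t)
  case (Var i) then show ?case using vneed_just by simp
next
  case Zero
  have "JT (\<lambda>y. y \<in> M) c (Suc 0) (lc xs) 0" using JT_Zero[of "\<lambda>y. y \<in> M" c "lc xs"] by simp
  then show ?case using Zero by (auto intro!: JustH_TEI)
next
  case (Sc t)
  let ?y = "TE (tc (Sc t)) (lc xs) (evt (envl xs) (Sc t))"
  have le: "?y \<le> c" using Sc by auto
  have m: "TE (tc t) (lc xs) (evt (envl xs) t) \<in> M" using Sc tneed_hd by auto
  then have "tc t \<le> c" "evt (envl xs) t \<le> c" using Sc(3) TE_le by blast+
  then have "JT (\<lambda>y. y \<in> M) c (tc (Sc t)) (lc xs) (evt (envl xs) (Sc t))"
    unfolding tc.simps evt.simps using m by (intro JT_Sc) simp_all
  then have "JustH (\<lambda>y. y \<in> M) c ?y" by (rule JustH_TEI[OF le])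
  then show ?case using Sc by auto
next
  case (Pl a b)
  let ?y = "TE (tc (Pl a b)) (lc xs) (evt (envl xs) (Pl a b))"
  have le: "?y \<le> c" using Pl by auto
  have m: "TE (tc a) (lc xs) (evt (envl xs) a) \<in> M" "TE (tc b) (lc xs) (evt (envl xs) b) \<in> M"
    using Pl tneed_hd by auto
  then have "tc a \<le> c" "evt (envl xs) a \<le> c" "tc b \<le> c" "evt (envl xs) b \<le> c" using Pl(4) TE_le by blast+
  then have "JT (\<lambda>y. y \<in> M) c (tc (Pl a b)) (lc xs) (evt (envl xs) (Pl a b))"
    unfolding tc.simps evt.simps using m by (intro JT_Pl) simp_all
  then have "JustH (\<lambda>y. y \<in> M) c ?y" by (rule JustH_TEI[OF le])
  then show ?case using Pl by auto
next
  case (Tm a b)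
  let ?y = "TE (tc (Tm a b)) (lc xs) (evt (envl xs) (Tm a b))"
  have le: "?y \<le> c" using Tm by auto
  have m: "TE (tc a) (lc xs) (evt (envl xs) a) \<in> M" "TE (tc b) (lc xs) (evt (envl xs) b) \<in> M"
    using Tm tneed_hd by auto
  then have "tc a \<le> c" "evt (envl xs) a \<le> c" "tc b \<le> c" "evt (envl xs) b \<le> c" using Tm(4) TE_le by blast+
  then have "JT (\<lambda>y. y \<in> M) c (tc (Tm a b)) (lc xs) (evt (envl xs) (Tm a b))"
    unfolding tc.simps evt.simps using m by (intro JT_Tm) simp_all
  then have "JustH (\<lambda>y. y \<in> M) c ?y" by (rule JustH_TEI[OF le])
  then show ?case using Tm by auto
qed


primrec fneed :: "fm \<Rightarrow> nat list \<Rightarrow> nat list" where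
  "fneed (Eq a b) xs = FE (fc (Eq a b)) (lc xs) (bv (evf (envl xs) X0 (Eq a b))) # tneed a xs @ tneed b xs"
| "fneed (Lt a b) xs = FE (fc (Lt a b)) (lc xs) (bv (evf (envl xs) X0 (Lt a b))) # tneed a xs @ tneed b xs"
| "fneed (Mem i t) xs = [FE (fc (Mem i t)) (lc xs) (bv (evf (envl xs) X0 (Mem i t)))]"
| "fneed (Neg p) xs = FE (fc (Neg p)) (lc xs) (bv (evf (envl xs) X0 (Neg p))) # fneed p xs"
| "fneed (Conj p q) xs = FE (fc (Conj p q)) (lc xs) (bv (evf (envl xs) X0 (Conj p q))) # fneed p xs @ fneed q xs"
| "fneed (Disj p q) xs = FE (fc (Disj p q)) (lc xs) (bv (evf (envl xs) X0 (Disj p q))) # fneed p xs @ fneed q xs"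
| "fneed (BEx t p) xs = FE (fc (BEx t p)) (lc xs) (bv (evf (envl xs) X0 (BEx t p))) # tneed t xs @
      concat (map (\<lambda>x. fneed p (x # xs)) [0..<evt (envl xs) t])"
| "fneed (BAll t p) xs = FE (fc (BAll t p)) (lc xs) (bv (evf (envl xs) X0 (BAll t p))) # tneed t xs @
      concat (map (\<lambda>x. fneed p (x # xs)) [0..<evt (envl xs) t])"
| "fneed (Ex p) xs = [FE (fc (Ex p)) (lc xs) (bv (evf (envl xs) X0 (Ex p)))]"
| "fneed (All p) xs = [FE (fc (All p)) (lc xs) (bv (evf (envl xs) X0 (All p)))]"

lemma fneed_hd: "FE (fc p) (lc xs) (bv (evf (envl xs) X0 p)) \<in> set (fneed p xs)"
  by (cases p) (simp_all only: fneed.simps list.set insert_iff simp_thms)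

lemma fneed_just: "delta0 p \<Longrightarrow> set (fneed p xs) \<subseteq> M \<Longrightarrow> \<forall>y\<in>M. y \<le> c \<Longrightarrow> y \<in> set (fneed p xs) \<Longrightarrow> JustH (\<lambda>y. y \<in> M) c y"
proof (induction p arbitrary: xs y)
  case (Eq a b)
  let ?y = "FE (fc (Eq a b)) (lc xs) (bv (evf (envl xs) X0 (Eq a b)))"
  have le: "?y \<le> c" using Eq by auto
  have m: "TE (tc a) (lc xs) (evt (envl xs) a) \<in> M" "TE (tc b) (lc xs) (evt (envl xs) b) \<in> M"
    using Eq tneed_hd by auto
  have b1: "tc a \<le> c" "evt (envl xs) a \<le> c" using TE_le m(1) Eq(3) by blast+
  have b2: "tc b \<le> c" "evt (envl xs) b \<le> c" using TE_le m(2) Eq(3) by blast+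
  have "JF (\<lambda>y. y \<in> M) c (fc (Eq a b)) (lc xs) (bv (evf (envl xs) X0 (Eq a b)))"
    unfolding fc.simps evf.simps by (rule JF_Eq[OF b1(1) b2(1) b1(2) b2(2) m])
  then have "JustH (\<lambda>y. y \<in> M) c ?y" by (rule JustH_FEI[OF le])
  moreover have "y = ?y \<or> y \<in> set (tneed a xs) \<or> y \<in> set (tneed b xs)" using Eq(4) by simp
  moreover have "set (tneed a xs) \<subseteq> M" "set (tneed b xs) \<subseteq> M" using Eq(2) by auto
  ultimately show ?case using tneed_just[OF _ Eq(3)] by blast
next
  case (Lt a b)
  let ?y = "FE (fc (Lt a b)) (lc xs) (bv (evf (envl xs) X0 (Lt a b)))"
  have le: "?y \<le> c" using Lt by auto
  have m: "TE (tc a) (lc xs) (evt (envl xs) a) \<in> M" "TE (tc b) (lc xs) (evt (envl xs) b) \<in> M"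
    using Lt tneed_hd by auto
  have b1: "tc a \<le> c" "evt (envl xs) a \<le> c" using TE_le m(1) Lt(3) by blast+
  have b2: "tc b \<le> c" "evt (envl xs) b \<le> c" using TE_le m(2) Lt(3) by blast+
  have "JF (\<lambda>y. y \<in> M) c (fc (Lt a b)) (lc xs) (bv (evf (envl xs) X0 (Lt a b)))"
    unfolding fc.simps evf.simps by (rule JF_Lt[OF b1(1) b2(1) b1(2) b2(2) m])
  then have "JustH (\<lambda>y. y \<in> M) c ?y" by (rule JustH_FEI[OF le])
  moreover have "y = ?y \<or> y \<in> set (tneed a xs) \<or> y \<in> set (tneed b xs)" using Lt(4) by simp
  moreover have "set (tneed a xs) \<subseteq> M" "set (tneed b xs) \<subseteq> M" using Lt(2) by auto
  ultimately show ?case using tneed_just[OF _ Lt(3)] by blast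
next
  case (Mem i t)
  let ?y = "FE (fc (Mem i t)) (lc xs) (bv (evf (envl xs) X0 (Mem i t)))"
  have le: "?y \<le> c" using Mem by auto
  then have "fc (Mem i t) \<le> c" using FE_le by blast
  then have "P i (tc t) \<le> c" by simp
  then have b: "i \<le> c" "tc t \<le> c" using P_le by blast+
  have "JF (\<lambda>y. y \<in> M) c (fc (Mem i t)) (lc xs) (bv (evf (envl xs) X0 (Mem i t)))"
    unfolding fc.simps evf.simps using JF_Mem[OF b] by simp
  then have "JustH (\<lambda>y. y \<in> M) c ?y" by (rule JustH_FEI[OF le])
  then show ?case using Mem by simp
next
  case (Neg p)
  let ?y = "FE (fc (Neg p)) (lc xs) (bv (evf (envl xs) X0 (Neg p)))"
  have le: "?y \<le> c" using Neg by auto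
  then have "fc (Neg p) \<le> c" using FE_le by blast
  then have b: "fc p \<le> c" by simp
  have "set (fneed p xs) \<subseteq> M" using Neg(3) by simp
  then have m: "FE (fc p) (lc xs) (bv (evf (envl xs) X0 p)) \<in> M" using fneed_hd[of p xs] by blast
  have "JF (\<lambda>y. y \<in> M) c (fc (Neg p)) (lc xs) (bv (evf (envl xs) X0 (Neg p)))"
    unfolding fc.simps evf.simps by (rule JF_Neg[where mem="\<lambda>y. y \<in> M" and B="evf (envl xs) X0 p", OF b m])
  then have "JustH (\<lambda>y. y \<in> M) c ?y" by (rule JustH_FEI[OF le])
  then show ?case using Neg by auto
next
  case (Conj p q)
  let ?y = "FE (fc (Conj p q)) (lc xs) (bv (evf (envl xs) X0 (Conj p q)))"
  have le: "?y \<le> c" using Conj by auto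
  then have "fc (Conj p q) \<le> c" using FE_le by blast
  then have "P (fc p) (fc q) \<le> c" by simp
  then have b: "fc p \<le> c" "fc q \<le> c" using P_le by blast+
  have m: "FE (fc p) (lc xs) (bv (evf (envl xs) X0 p)) \<in> M" "FE (fc q) (lc xs) (bv (evf (envl xs) X0 q)) \<in> M"
    using Conj(4) fneed_hd[of p xs] fneed_hd[of q xs] by (auto simp del: fneed.simps, auto)
  have "JF (\<lambda>y. y \<in> M) c (fc (Conj p q)) (lc xs) (bv (evf (envl xs) X0 (Conj p q)))"
    unfolding fc.simps evf.simps by (rule JF_Conj[where mem="\<lambda>y. y \<in> M" and ?B1.0="evf (envl xs) X0 p" and ?B2.0="evf (envl xs) X0 q", OF b m])
  then have "JustH (\<lambda>y. y \<in> M) c ?y" by (rule JustH_FEI[OF le])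
  then show ?case using Conj by auto
next
  case (Disj p q)
  let ?y = "FE (fc (Disj p q)) (lc xs) (bv (evf (envl xs) X0 (Disj p q)))"
  have le: "?y \<le> c" using Disj by auto
  then have "fc (Disj p q) \<le> c" using FE_le by blast
  then have "P (fc p) (fc q) \<le> c" by simp
  then have b: "fc p \<le> c" "fc q \<le> c" using P_le by blast+
  have m: "FE (fc p) (lc xs) (bv (evf (envl xs) X0 p)) \<in> M" "FE (fc q) (lc xs) (bv (evf (envl xs) X0 q)) \<in> M"
    using Disj(4) fneed_hd[of p xs] fneed_hd[of q xs] by (auto simp del: fneed.simps, auto)
  have "JF (\<lambda>y. y \<in> M) c (fc (Disj p q)) (lc xs) (bv (evf (envl xs) X0 (Disj p q)))"
    unfolding fc.simps evf.simps by (rule JF_Disj[where mem="\<lambda>y. y \<in> M" and ?B1.0="evf (envl xs) X0 p" and ?B2.0="evf (envl xs) X0 q", OF b m])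
  then have "JustH (\<lambda>y. y \<in> M) c ?y" by (rule JustH_FEI[OF le])
  then show ?case using Disj by auto
next
  case (BEx t p)
  let ?v = "evt (envl xs) t"
  let ?y = "FE (fc (BEx t p)) (lc xs) (bv (evf (envl xs) X0 (BEx t p)))"
  have le: "?y \<le> c" using BEx by auto
  then have "fc (BEx t p) \<le> c" using FE_le by blast
  then have "P (tc t) (fc p) \<le> c" by simp
  then have b: "tc t \<le> c" "fc p \<le> c" using P_le by blast+
  have mt: "TE (tc t) (lc xs) ?v \<in> M" using BEx tneed_hd by auto
  then have bv: "?v \<le> c" using TE_le BEx(4) by blast
  have sub: "set (fneed p (x # xs)) \<subseteq> M" if "x < ?v" for x
  proof -
    have "(\<Union>x\<in>{0..<?v}. set (fneed p (x # xs))) \<subseteq> M" using BEx(3) by simp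
    then show ?thesis using that by (simp add: UN_subset_iff)
  qed
  have m: "\<forall>x<?v. FE (fc p) (lcons x (lc xs)) (bv (evf (envl (x # xs)) X0 p)) \<in> M"
    using sub fneed_hd by (metis lc.simps(2) subsetD)
  have "JF (\<lambda>y. y \<in> M) c (fc (BEx t p)) (lc xs) (bv (\<exists>x<?v. evf (envl (x # xs)) X0 p))"
    unfolding fc.simps by (rule JF_BEx[where mem="\<lambda>y. y \<in> M" and B="\<lambda>x. evf (envl (x # xs)) X0 p", OF b(1) b(2) bv mt m])
  then have "JF (\<lambda>y. y \<in> M) c (fc (BEx t p)) (lc xs) (bv (evf (envl xs) X0 (BEx t p)))"
    by (simp add: envl_cons)
  then have "JustH (\<lambda>y. y \<in> M) c ?y" by (rule JustH_FEI[OF le])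
  moreover have "JustH (\<lambda>y. y \<in> M) c y" if "y \<in> set (tneed t xs)" using tneed_just BEx that by auto
  moreover have "JustH (\<lambda>y. y \<in> M) c y" if "x < ?v" "y \<in> set (fneed p (x # xs))" for x
    using BEx.IH[of "x # xs" y] BEx(2,4) sub that by auto
  ultimately show ?case using BEx(5) by auto
next
  case (BAll t p)
  let ?v = "evt (envl xs) t"
  let ?y = "FE (fc (BAll t p)) (lc xs) (bv (evf (envl xs) X0 (BAll t p)))"
  have le: "?y \<le> c" using BAll by auto
  then have "fc (BAll t p) \<le> c" using FE_le by blast
  then have "P (tc t) (fc p) \<le> c" by simp
  then have b: "tc t \<le> c" "fc p \<le> c" using P_le by blast+
  have mt: "TE (tc t) (lc xs) ?v \<in> M" using BAll tneed_hd by auto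
  then have bv: "?v \<le> c" using TE_le BAll(4) by blast
  have sub: "set (fneed p (x # xs)) \<subseteq> M" if "x < ?v" for x
  proof -
    have "(\<Union>x\<in>{0..<?v}. set (fneed p (x # xs))) \<subseteq> M" using BAll(3) by simp
    then show ?thesis using that by (simp add: UN_subset_iff)
  qed
  have m: "\<forall>x<?v. FE (fc p) (lcons x (lc xs)) (bv (evf (envl (x # xs)) X0 p)) \<in> M"
    using sub fneed_hd by (metis lc.simps(2) subsetD)
  have "JF (\<lambda>y. y \<in> M) c (fc (BAll t p)) (lc xs) (bv (\<forall>x<?v. evf (envl (x # xs)) X0 p))"
    unfolding fc.simps by (rule JF_BAll[where mem="\<lambda>y. y \<in> M" and B="\<lambda>x. evf (envl (x # xs)) X0 p", OF b(1) b(2) bv mt m])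
  then have "JF (\<lambda>y. y \<in> M) c (fc (BAll t p)) (lc xs) (bv (evf (envl xs) X0 (BAll t p)))"
    by (simp add: envl_cons)
  then have "JustH (\<lambda>y. y \<in> M) c ?y" by (rule JustH_FEI[OF le])
  moreover have "JustH (\<lambda>y. y \<in> M) c y" if "y \<in> set (tneed t xs)" using tneed_just BAll that by auto
  moreover have "JustH (\<lambda>y. y \<in> M) c y" if "x < ?v" "y \<in> set (fneed p (x # xs))" for x
    using BAll.IH[of "x # xs" y] BAll(2,4) sub that by auto
  ultimately show ?case using BAll(5) by auto
qed auto

lemma complete: assumes "delta0 p"
  shows "\<exists>c d len. GoodH c d len \<and> InW c d len (FE (fc p) (lc xs) (bv (evf (envl xs) X0 p)))"
proof -
  define L where "L = fneed p xs"
  obtain c d where cd: "\<forall>j<length L. beta c d j = L ! j" using beta_exists by blast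
  have inw: "InW c d (length L) = (\<lambda>y. y \<in> set L)"
    by (rule ext) (auto simp: InW_def in_set_conv_nth cd)
  have bnd: "\<forall>y\<in>set L. y \<le> c" using cd beta_le by (metis in_set_conv_nth)
  have "GoodH c d (length L)"
    unfolding GoodH_def inw
  proof (intro allI impI)
    fix j assume "j < length L"
    then have "beta c d j \<in> set L" using cd by simp
    then show "JustH (\<lambda>y. y \<in> set L) c (beta c d j)"
      using fneed_just[OF assms _ bnd] L_def by blast
  qed
  moreover have "InW c d (length L) (FE (fc p) (lc xs) (bv (evf (envl xs) X0 p)))"
    unfolding inw using fneed_hd L_def by simp
  ultimately show ?thesis by blast
qed

definition T1 :: "nat \<Rightarrow> nat \<Rightarrow> bool" where "T1 D R = (\<exists>z. BaseSem z D R)"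

lemma T1_char: assumes "delta0 p"
  shows "T1 (fc p) (lc xs) \<longleftrightarrow> (\<exists>x. \<not> evf (envl (x # xs)) X0 p)"
proof
  assume "T1 (fc p) (lc xs)"
  then obtain x c d len where h: "GoodH c d len" "InW c d len (FE (fc p) (lc (x # xs)) 0)"
    unfolding T1_def BaseSem_def by auto
  from form_sound[OF h(1) _ h(2)] show "\<exists>x. \<not> evf (envl (x # xs)) X0 p" by auto
next
  assume "\<exists>x. \<not> evf (envl (x # xs)) X0 p"
  then obtain x where x: "\<not> evf (envl (x # xs)) X0 p" by blast
  from complete[OF assms, of "x # xs"] x obtain c d len where
    h: "GoodH c d len" "InW c d len (FE (fc p) (lcons x (lc xs)) 0)" by auto
  let ?z = "x + c + d + len"
  have "x \<le> ?z" "c \<le> ?z" "d \<le> ?z" "len \<le> ?z" by auto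
  then have "BaseSem ?z (fc p) (lc xs)" unfolding BaseSem_def using h by blast
  then show "T1 (fc p) (lc xs)" unfolding T1_def by blast
qed


definition Base :: fm where "Base = cf [] BaseN"

lemma evf_Base: "evf e X Base = BaseSem (e 0) (e 1) (e 2)"
  by (simp add: Base_def evf_cf0 BaseN_sem)

lemma delta0_Base: "delta0 Base" by (simp add: Base_def delta0_cf)

definition lconsT :: "trm \<Rightarrow> trm \<Rightarrow> trm" where
  "lconsT x r = Sc (Pl (Tm (Pl x r) (Pl x r)) x)"

lemma evt_lconsT[simp]: "evt e (lconsT x r) = lcons (evt e x) (evt e r)"
  by (simp add: lconsT_def lcons_def P_def)

definition usig :: "nat \<Rightarrow> trm" where
  "usig i = (if i = 0 then Var 1 else if i = 1 then lconsT (Var 0) (Var 2) else Var (Suc i))"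

primrec U :: "nat \<Rightarrow> fm" where
  "U 0 = Ex (Neg (Neg Base))"
| "U (Suc k) = Ex (Neg (substf usig (U k)))"

primrec usem :: "nat \<Rightarrow> nat \<Rightarrow> nat \<Rightarrow> bool" where
  "usem 0 D R = T1 D R"
| "usem (Suc k) D R = (\<exists>y. \<not> usem k D (lcons y R))"

lemma U_sem: "evf e X (U k) = usem k (e 0) (e 1)"
proof (induction k arbitrary: e)
  case 0 then show ?case by (simp add: evf_Base T1_def)
next
  case (Suc k)
  have "(\<lambda>i. evt (case_nat y e) (usig i)) 0 = e 0" "(\<lambda>i. evt (case_nat y e) (usig i)) 1 = lcons y (e 1)" for y
    by (auto simp: usig_def)
  then show ?case using Suc by (simp add: evf_substf)
qed

lemma U_exneg: "\<exists>d. delta0 d \<and> U k = exneg (Suc k) d"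
proof (induction k)
  case 0 then show ?case by (intro exI[of _ "Neg Base"]) (simp add: delta0_Base)
next
  case (Suc k)
  then obtain d where d: "delta0 d" "U k = exneg (Suc k) d" by blast
  let ?d = "substM ((ups ^^ Suc k) usig) ((liftt ^^ Suc k) Zero) ((liftt ^^ Suc k) Zero) False d"
  have "U (Suc k) = Ex (Neg (substf usig (U k)))" by simp
  also have "\<dots> = Ex (Neg (exneg (Suc k) ?d))" using d(2) by (simp only: substM_exneg)
  also have "\<dots> = exneg (Suc (Suc k)) ?d" by (simp only: exneg.simps(2))
  finally have "U (Suc k) = exneg (Suc (Suc k)) ?d" .
  moreover have "delta0 ?d" using d(1) by simp
  ultimately show ?case by blast
qed

lemma usem_char: "delta0 d \<Longrightarrow> usem k (fc d) (lc xs) = evf (envl xs) X0 (exneg (Suc k) d)"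
proof (induction k arbitrary: xs)
  case 0 then show ?case by (simp add: T1_char envl_cons)
next
  case (Suc k)
  have "usem (Suc k) (fc d) (lc xs) = (\<exists>y. \<not> usem k (fc d) (lc (y # xs)))" by simp
  also have "\<dots> = (\<exists>y. \<not> evf (envl (y # xs)) X0 (exneg (Suc k) d))" by (simp only: Suc.IH[OF Suc.prems])
  also have "\<dots> = evf (envl xs) X0 (Ex (Neg (exneg (Suc k) d)))" by (simp only: evf.simps envl_cons)
  finally show ?case by (simp only: exneg.simps(2)[of "Suc k"])
qed

definition Asem :: "nat \<Rightarrow> nat set" where
  "Asem k = {s. s mod 4 = 1 \<and> usem k s (lc [s])}"

lemma negneg_exneg: "evf e X (exneg m (Neg (Neg d))) = evf e X (exneg m d)"
  by (rule ET) simp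

lemma diag: "\<not> (\<exists>p. sigma_fm (Suc k) p \<and> (\<forall>s. s \<notin> Asem k \<longleftrightarrow> evf (envl [s]) X0 p))"
proof
  assume "\<exists>p. sigma_fm (Suc k) p \<and> (\<forall>s. s \<notin> Asem k \<longleftrightarrow> evf (envl [s]) X0 p)"
  then obtain p where p: "sigma_fm (Suc k) p" "\<forall>s. s \<notin> Asem k \<longleftrightarrow> evf (envl [s]) X0 p" by blast
  then obtain d where d: "delta0 d" "p = exneg (Suc k) d" using sigma_exneg by blast
  then have h: "\<forall>s. s \<notin> Asem k \<longleftrightarrow> evf (envl [s]) X0 (exneg (Suc k) d)" using p by simp
  let ?c = "fc (Neg (Neg d))"
  have m4: "?c mod 4 = 1" by simp presburger
  have "usem k ?c (lc [?c]) = evf (envl [?c]) X0 (exneg (Suc k) (Neg (Neg d)))"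
    using d(1) by (intro usem_char) simp
  also have "\<dots> = evf (envl [?c]) X0 (exneg (Suc k) d)" by (rule negneg_exneg)
  also have "\<dots> = (?c \<notin> Asem k)" using h by simp
  also have "\<dots> = (\<not> usem k ?c (lc [?c]))" using m4 by (simp add: Asem_def)
  finally show False by simp
qed

definition Enat :: "nat \<Rightarrow> (nat \<times> nat) set" where
  "Enat k = {(a, b). a = b \<or> ((b = Suc a \<or> a = Suc b) \<and> a + b \<in> Asem k)}"

definition ne :: "nat \<Rightarrow> nat \<Rightarrow> nat \<Rightarrow> nat" where
  "ne a b = (\<lambda>i. if i = 0 then a else if i = 1 then b else 0)"

lemma ne_0[simp]: "ne a b 0 = a" and ne_1[simp]: "ne a b (Suc 0) = b"
  by (auto simp: ne_def)

lemma envl1: "envl [s] = (\<lambda>i. if i = 0 then s else 0)"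
  by (rule ext) (simp add: envl_def)

definition sigE :: "nat \<Rightarrow> trm" where
  "sigE i = (if i = 0 then Pl (Var 0) (Var 1) else if i = 1 then lconsT (Pl (Var 0) (Var 1)) Zero else Zero)"

definition condE :: fm where
  "condE = Conj (Disj (Eq (Var 1) (Sc (Var 0))) (Eq (Var 0) (Sc (Var 1))))
     (BEx (Sc (Pl (Var 0) (Var 1))) (Eq (Pl (Var 1) (Var 2)) (Sc (Tm (Sc (Sc (Sc (Sc Zero)))) (Var 0)))))"

lemma mod4_iff: "(\<exists>q<Suc s. s = Suc (4 * q)) \<longleftrightarrow> s mod 4 = 1"
proof
  assume "\<exists>q<Suc s. s = Suc (4 * q)" then show "s mod 4 = 1" by auto
next
  assume "s mod 4 = 1"
  then have "s = Suc (4 * (s div 4))" by presburger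
  then show "\<exists>q<Suc s. s = Suc (4 * q)" by (intro exI[of _ "s div 4"]) auto
qed

lemma mod4_iff2[simp]: "(\<exists>x<Suc s. s = Suc (x + (x + (x + x)))) \<longleftrightarrow> s mod 4 = 1"
proof -
  have e: "\<And>x::nat. x + (x + (x + x)) = 4 * x" by simp
  show ?thesis unfolding e by (rule mod4_iff)
qed

lemma evf_condE: "evf (ne a b) X condE = ((b = Suc a \<or> a = Suc b) \<and> (a + b) mod 4 = 1)"
  by (simp add: condE_def ne_def)

lemma Enat_def2: "(a, b) \<in> Enat k \<longleftrightarrow> a = b \<or> ((b = Suc a \<or> a = Suc b) \<and> (a + b) mod 4 = 1 \<and> usem k (a + b) (lc [a + b]))"
  by (auto simp: Enat_def Asem_def)

definition EnatF :: "nat \<Rightarrow> fm" where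
  "EnatF k = disjS (Suc k) (conjS (Suc k) (SOME d. delta0 d \<and> substf sigE (U k) = exneg (Suc k) d) condE) (Eq (Var 0) (Var 1))"

lemma EU: "\<exists>d. delta0 d \<and> substf sigE (U k) = exneg (Suc k) d"
proof -
  obtain d where "delta0 d" "U k = exneg (Suc k) d" using U_exneg by blast
  then show ?thesis by (simp only: substM_exneg) (blast intro: delta0_substM[THEN iffD2])
qed

lemma EnatF_delta0: "delta0 (EnatF k)"
proof -
  have "delta0 (SOME d. delta0 d \<and> substf sigE (U k) = exneg (Suc k) d)" using someI_ex[OF EU] by blast
  then show ?thesis unfolding EnatF_def by (intro delta0_disjS delta0_conjS) (auto simp: condE_def)
qed

lemma EnatF_sem: "evf (ne a b) X (exneg (Suc k) (EnatF k)) = ((a, b) \<in> Enat k)"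
proof -
  let ?d = "SOME d. delta0 d \<and> substf sigE (U k) = exneg (Suc k) d"
  have eq: "substf sigE (U k) = exneg (Suc k) ?d" using someI_ex[OF EU] by blast
  have "evf (ne a b) X (exneg (Suc k) ?d) = evf (ne a b) X (substf sigE (U k))" using eq by simp
  also have "\<dots> = usem k (a + b) (lc [a + b])"
    by (simp add: evf_substf U_sem sigE_def)
  finally show ?thesis unfolding EnatF_def disjS_sem conjS_sem evf_condE Enat_def2
    by (auto simp: ne_def)
qed

lemma Sigma_Enat: "Sigma_nat2 (Suc k) (Enat k)"
proof -
  have "\<forall>a b. (a, b) \<in> Enat k \<longleftrightarrow> evf (ne a b) X0 (exneg (Suc k) (EnatF k))"
    using EnatF_sem by blast
  then show ?thesis unfolding Sigma_nat2_def ne_def using sigma_exneg2[OF EnatF_delta0] by blast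
qed


lemma Enat_refl: "(a, a) \<in> Enat k" by (simp add: Enat_def)
lemma Enat_sym: "(a, b) \<in> Enat k \<Longrightarrow> (b, a) \<in> Enat k" by (auto simp: Enat_def add.commute)
lemma Enat_pair: "(a, b) \<in> Enat k \<Longrightarrow> a \<noteq> b \<Longrightarrow> (b = Suc a \<or> a = Suc b) \<and> (a + b) mod 4 = 1"
  by (auto simp: Enat_def Asem_def)
lemma Enat_cls: "(a, b) \<in> Enat k \<Longrightarrow> (a, c) \<in> Enat k \<Longrightarrow> a \<noteq> b \<Longrightarrow> a \<noteq> c \<Longrightarrow> b = c"
proof -
  assume h: "(a, b) \<in> Enat k" "(a, c) \<in> Enat k" "a \<noteq> b" "a \<noteq> c"
  from Enat_pair[OF h(1,3)] Enat_pair[OF h(2,4)] show "b = c"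
    by (elim conjE disjE) (simp_all, presburger+)
qed
lemma Enat_trans: "(a, b) \<in> Enat k \<Longrightarrow> (b, c) \<in> Enat k \<Longrightarrow> (a, c) \<in> Enat k"
proof -
  assume h: "(a, b) \<in> Enat k" "(b, c) \<in> Enat k"
  show ?thesis
  proof (cases "a = b \<or> b = c")
    case True then show ?thesis using h by auto
  next
    case False
    then have "a = c" using Enat_cls[OF Enat_sym[OF h(1)] h(2)] by auto
    then show ?thesis by (simp add: Enat_refl)
  qed
qed
lemma Enat_equiv: "equiv UNIV (Enat k)"
proof (rule equivI)
  show "refl_on UNIV (Enat k)" by (rule refl_onI) (rule Enat_refl)
  show "sym (Enat k)" by (rule symI) (erule Enat_sym)
  show "trans (Enat k)" by (rule transI) (erule (1) Enat_trans)
qed simp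

lemma Asem_iff: "s \<notin> Asem k \<longleftrightarrow> (\<exists>h. (h, Suc h) \<notin> Enat k \<and> s = Suc (h + h)) \<or> \<not> s mod 4 = 1"
proof -
  have e: "(h, Suc h) \<in> Enat k \<longleftrightarrow> Suc (h + h) \<in> Asem k" for h by (simp add: Enat_def)
  show ?thesis
  proof
    assume s: "s \<notin> Asem k"
    show "(\<exists>h. (h, Suc h) \<notin> Enat k \<and> s = Suc (h + h)) \<or> \<not> s mod 4 = 1"
    proof (cases "s mod 4 = 1")
      case True
      then have "s = Suc (s div 2 + s div 2)" by presburger
      then show ?thesis using s e by metis
    qed simp
  next
    assume "(\<exists>h. (h, Suc h) \<notin> Enat k \<and> s = Suc (h + h)) \<or> \<not> s mod 4 = 1"
    then show "s \<notin> Asem k" using e by (auto simp: Asem_def)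
  qed
qed

definition tauE :: "nat \<Rightarrow> trm" where
  "tauE i = (if i = 0 then Var 0 else if i = 1 then Sc (Var 0) else Zero)"

lemma notPi: "\<not> Sigma_nat2 (Suc k) (- Enat k)"
proof
  assume "Sigma_nat2 (Suc k) (- Enat k)"
  then obtain p where p: "sigma_fm (Suc k) p" "\<forall>a b. (a, b) \<in> - Enat k \<longleftrightarrow> evf (ne a b) X0 p"
    unfolding Sigma_nat2_def ne_def by blast
  then obtain d where d: "delta0 d" "p = exneg (Suc k) d" using sigma_exneg by blast
  let ?dt = "substM ((ups ^^ Suc k) tauE) ((liftt ^^ Suc k) Zero) ((liftt ^^ Suc k) Zero) False d"
  have dt: "substf tauE p = exneg (Suc k) ?dt" using d(2) by (simp only: substM_exneg)
  let ?th = "Eq (Var 1) (Sc (Pl (Var 0) (Var 0)))"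
  let ?tm = "Neg (BEx (Sc (Var 0)) (Eq (Var 1) (Sc (Tm (Sc (Sc (Sc (Sc Zero)))) (Var 0)))))"
  let ?D = "disjS (Suc k) (mergeb k (conjS (Suc k) ?dt ?th)) ?tm"
  have del: "delta0 ?D" using d(1)
    by (intro delta0_disjS delta0_mergeb delta0_conjS) auto
  have sem: "evf (envl [s]) X0 (exneg (Suc k) ?D) \<longleftrightarrow> s \<notin> Asem k" for s
  proof -
    have a: "evf (case_nat h (envl [s])) X0 (exneg (Suc k) ?dt) = ((h, Suc h) \<notin> Enat k)" for h
    proof -
      have "(\<lambda>i. evt (case_nat h (envl [s])) (tauE i)) = ne h (Suc h)"
        by (rule ext) (simp add: tauE_def ne_def)
      then have "evf (case_nat h (envl [s])) X0 (substf tauE p) = evf (ne h (Suc h)) X0 p"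
        by (simp add: evf_substf)
      then show ?thesis using dt p(2) by simp
    qed
    have b: "evf (case_nat h (envl [s])) X0 ?th = (s = Suc (h + h))" for h by (simp add: envl_def)
    have c: "evf (envl [s]) X0 ?tm = (\<not> s mod 4 = 1)" by (simp add: envl_def)
    have "evf (envl [s]) X0 (exneg (Suc k) ?D) =
       ((\<exists>h. evf (case_nat h (envl [s])) X0 (exneg (Suc k) ?dt) \<and> evf (case_nat h (envl [s])) X0 ?th) \<or> evf (envl [s]) X0 ?tm)"
      by (simp only: disjS_sem mergeb_sem conjS_sem)
    also have "\<dots> = ((\<exists>h. (h, Suc h) \<notin> Enat k \<and> s = Suc (h + h)) \<or> \<not> s mod 4 = 1)"
      by (simp only: a b c)
    finally show ?thesis using Asem_iff by simp
  qed
  have "sigma_fm (Suc k) (exneg (Suc k) ?D)" by (rule sigma_exneg2[OF del])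
  then show False using diag[of k] sem by blast
qed

lemma cls_graph:
  assumes "irrefl G" "G\<^sup>* = E" "\<And>a b c. (a, b) \<in> E \<Longrightarrow> (a, c) \<in> E \<Longrightarrow> a \<noteq> b \<Longrightarrow> a \<noteq> c \<Longrightarrow> b = c"
  shows "(a, b) \<in> G \<longleftrightarrow> (a, b) \<in> E \<and> a \<noteq> b"
proof
  assume h: "(a, b) \<in> G"
  then show "(a, b) \<in> E \<and> a \<noteq> b" using assms(1,2) by (auto simp: irrefl_def)
next
  assume h: "(a, b) \<in> E \<and> a \<noteq> b"
  then have "(a, b) \<in> G\<^sup>*" using assms(2) by simp
  then show "(a, b) \<in> G"
  proof (cases rule: converse_rtranclE)
    case base then show ?thesis using h by simp
  next
    case (step c)
    then have "(a, c) \<in> E" "a \<noteq> c" using assms(1,2) by (auto simp: irrefl_def)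
    then have "c = b" using assms(3) h by blast
    then show ?thesis using step by simp
  qed
qed

lemma Sigma_nat2_neq: assumes "Sigma_nat2 (Suc k) SS" shows "Sigma_nat2 (Suc k) {(a, b). a \<noteq> b \<and> (a, b) \<in> SS}"
proof -
  obtain p where p: "sigma_fm (Suc k) p" "\<forall>a b. (a, b) \<in> SS \<longleftrightarrow> evf (ne a b) X0 p"
    using assms unfolding Sigma_nat2_def ne_def by blast
  then obtain d where d: "delta0 d" "p = exneg (Suc k) d" using sigma_exneg by blast
  let ?D = "conjS (Suc k) d (Neg (Eq (Var 0) (Var 1)))"
  have "sigma_fm (Suc k) (exneg (Suc k) ?D)" using d(1) by (intro sigma_exneg2 delta0_conjS) auto
  moreover have "(a, b) \<in> {(a, b). a \<noteq> b \<and> (a, b) \<in> SS} \<longleftrightarrow> evf (ne a b) X0 (exneg (Suc k) ?D)" for a b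
    using p(2) d(2) by (simp only: conjS_sem) (auto simp: ne_def)
  ultimately show ?thesis unfolding Sigma_nat2_def ne_def by blast
qed

lemma nat_notgraph: "\<not> graphable (Pi_nat2 (Suc k)) (Enat k)"
proof
  assume "graphable (Pi_nat2 (Suc k)) (Enat k)"
  then obtain G where G: "Pi_nat2 (Suc k) G" "irrefl G" "G\<^sup>* = Enat k" unfolding graphable_def by blast
  have gi: "(a, b) \<in> G \<longleftrightarrow> (a, b) \<in> Enat k \<and> a \<noteq> b" for a b
    by (rule cls_graph[OF G(2) G(3)]) (use Enat_cls in blast)
  have "Sigma_nat2 (Suc k) {(a, b). a \<noteq> b \<and> (a, b) \<in> - G}"
    using G(1) unfolding Pi_nat2_def by (rule Sigma_nat2_neq)
  moreover have "{(a, b). a \<noteq> b \<and> (a, b) \<in> - G} = - Enat k"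
    using gi Enat_refl by auto
  ultimately show False using notPi by simp
qed


definition chi :: "nat \<Rightarrow> nat \<Rightarrow> bool" where "chi a = (\<lambda>i. i = a)"

lemma chi_inj[simp]: "chi a = chi b \<longleftrightarrow> a = b"
  unfolding chi_def by (metis)

definition Ec :: "nat \<Rightarrow> (cantor \<times> cantor) set" where
  "Ec k = {(x, y). x = y \<or> (\<exists>a b. x = chi a \<and> y = chi b \<and> a \<noteq> b \<and> (a, b) \<in> Enat k)}"

definition cenv :: "cantor \<Rightarrow> cantor \<Rightarrow> nat \<Rightarrow> nat \<Rightarrow> bool" where
  "cenv x y = (\<lambda>i. if i = 0 then x else if i = 1 then y else (\<lambda>_. False))"

lemma Ec_refl: "(x, x) \<in> Ec k" by (simp add: Ec_def)
lemma Ec_sym: "(x, y) \<in> Ec k \<Longrightarrow> (y, x) \<in> Ec k"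
  unfolding Ec_def using Enat_sym by blast
lemma Ec_cls: "(x, y) \<in> Ec k \<Longrightarrow> (x, z) \<in> Ec k \<Longrightarrow> x \<noteq> y \<Longrightarrow> x \<noteq> z \<Longrightarrow> y = z"
proof -
  assume h: "(x, y) \<in> Ec k" "(x, z) \<in> Ec k" "x \<noteq> y" "x \<noteq> z"
  obtain a b where ab: "x = chi a" "y = chi b" "a \<noteq> b" "(a, b) \<in> Enat k" using h(1,3) unfolding Ec_def by blast
  obtain a' c where ac: "x = chi a'" "z = chi c" "a' \<noteq> c" "(a', c) \<in> Enat k" using h(2,4) unfolding Ec_def by blast
  have "a' = a" using ab(1) ac(1) by simp
  then have "b = c" using Enat_cls[OF ab(4)] ac ab by blast
  then show "y = z" using ab ac by simp
qed
lemma Ec_trans: "(x, y) \<in> Ec k \<Longrightarrow> (y, z) \<in> Ec k \<Longrightarrow> (x, z) \<in> Ec k"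
proof -
  assume h: "(x, y) \<in> Ec k" "(y, z) \<in> Ec k"
  show ?thesis
  proof (cases "x = y \<or> y = z")
    case True then show ?thesis using h by auto
  next
    case False
    then have "x = z" using Ec_cls[OF Ec_sym[OF h(1)] h(2)] by auto
    then show ?thesis by (simp add: Ec_refl)
  qed
qed
lemma Ec_equiv: "equiv UNIV (Ec k)"
proof (rule equivI)
  show "refl_on UNIV (Ec k)" by (rule refl_onI) (rule Ec_refl)
  show "sym (Ec k)" by (rule symI) (erule Ec_sym)
  show "trans (Ec k)" by (rule transI) (erule (1) Ec_trans)
qed simp

lemma Ec_char: "(x, y) \<in> Ec k \<longleftrightarrow> (\<exists>a b. (\<forall>i. (a = b \<and> (x i = y i)) \<or> (a \<noteq> b \<and> (x i = (i = a)) \<and> (y i = (i = b)))) \<and> (a, b) \<in> Enat k)"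
proof
  assume "(x, y) \<in> Ec k"
  then consider "x = y" | a b where "x = chi a" "y = chi b" "a \<noteq> b" "(a, b) \<in> Enat k" unfolding Ec_def by blast
  then show "\<exists>a b. (\<forall>i. (a = b \<and> (x i = y i)) \<or> (a \<noteq> b \<and> (x i = (i = a)) \<and> (y i = (i = b)))) \<and> (a, b) \<in> Enat k"
  proof cases
    case 1 then show ?thesis using Enat_refl by blast
  next
    case 2 then show ?thesis by (intro exI[of _ a] exI[of _ b]) (auto simp: chi_def)
  qed
next
  assume "\<exists>a b. (\<forall>i. (a = b \<and> (x i = y i)) \<or> (a \<noteq> b \<and> (x i = (i = a)) \<and> (y i = (i = b)))) \<and> (a, b) \<in> Enat k"
  then obtain a b where h: "\<forall>i. (a = b \<and> (x i = y i)) \<or> (a \<noteq> b \<and> (x i = (i = a)) \<and> (y i = (i = b)))" "(a, b) \<in> Enat k"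
    by blast
  show "(x, y) \<in> Ec k"
  proof (cases "a = b")
    case True then have "x = y" using h(1) by auto
    then show ?thesis by (simp add: Ec_refl)
  next
    case False
    then have "x = chi a" "y = chi b" using h(1) by (auto simp: chi_def)
    then show ?thesis using False h(2) unfolding Ec_def by blast
  qed
qed

definition rhoC :: "nat \<Rightarrow> trm" where
  "rhoC i = (if i = 0 then Var 1 else if i = 1 then Var 0 else Zero)"

definition iffF :: "fm \<Rightarrow> fm \<Rightarrow> fm" where "iffF p q = Disj (Conj p q) (Conj (Neg p) (Neg q))"

definition Cf :: fm where
  "Cf = Disj (Conj (Eq (Var 2) (Var 1)) (iffF (Mem 0 (Var 0)) (Mem 1 (Var 0))))
          (Conj (Neg (Eq (Var 2) (Var 1))) (Conj (iffF (Mem 0 (Var 0)) (Eq (Var 0) (Var 2))) (iffF (Mem 1 (Var 0)) (Eq (Var 0) (Var 1)))))"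

lemma Cf_sem: "evf (case_nat i (case_nat b (case_nat a e))) (cenv x y) Cf =
   ((a = b \<and> (x i = y i)) \<or> (a \<noteq> b \<and> (x i = (i = a)) \<and> (y i = (i = b))))"
  by (auto simp: Cf_def iffF_def cenv_def)

lemma Sigma_Ec: "Sigma_cantor2 (Suc (Suc k')) (Ec (Suc k'))"
proof -
  let ?k = "Suc k'"
  let ?dE = "substM ((ups ^^ Suc ?k) rhoC) ((liftt ^^ Suc ?k) Zero) ((liftt ^^ Suc ?k) Zero) False (EnatF ?k)"
  have dE: "substf rhoC (exneg (Suc ?k) (EnatF ?k)) = exneg (Suc ?k) ?dE" by (simp only: substM_exneg)
  let ?D = "mergeb ?k (mergeb ?k (conjP1 k' ?dE Cf))"
  have del: "delta0 ?D"
    by (intro delta0_mergeb delta0_conjP1) (auto simp: EnatF_delta0 Cf_def iffF_def)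
  have en: "evf (case_nat b (case_nat a e)) X (exneg (Suc ?k) ?dE) = ((a, b) \<in> Enat ?k)" for a b e X
  proof -
    have "(\<lambda>i. evt (case_nat b (case_nat a e)) (rhoC i)) = ne a b"
      by (rule ext) (simp add: rhoC_def ne_def)
    then have "evf (case_nat b (case_nat a e)) X (substf rhoC (exneg (Suc ?k) (EnatF ?k))) = evf (ne a b) X (exneg (Suc ?k) (EnatF ?k))"
      by (simp only: evf_substf)
    then show ?thesis using EnatF_sem[of a b X ?k] by (simp only: dE)
  qed
  have sem: "evf (\<lambda>_. 0) (cenv x y) (exneg (Suc ?k) ?D) = ((x, y) \<in> Ec ?k)" for x y
  proof -
    have "evf (\<lambda>_. 0) (cenv x y) (exneg (Suc ?k) ?D) =
      (\<exists>a b. evf (case_nat b (case_nat a (\<lambda>_. 0))) (cenv x y) (exneg (Suc (Suc k')) (conjP1 k' ?dE Cf)))"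
      by (simp only: mergeb_sem)
    also have "\<dots> = (\<exists>a b. (\<forall>i. evf (case_nat i (case_nat b (case_nat a (\<lambda>_. 0)))) (cenv x y) Cf) \<and>
          evf (case_nat b (case_nat a (\<lambda>_. 0))) (cenv x y) (exneg (Suc ?k) ?dE))"
      by (simp only: conjP1_sem)
    also have "\<dots> = ((x, y) \<in> Ec ?k)" by (simp only: Cf_sem en Ec_char)
    finally show ?thesis .
  qed
  show ?thesis unfolding Sigma_cantor2_def
    using sigma_exneg2[OF del] sem unfolding cenv_def by blast
qed

lemma Xm_chi: "Xm X0 a b True = cenv (chi a) (chi b)"
  by (rule ext) (simp add: Xm_def cenv_def chi_def)

lemma cantor_notgraph: "\<not> graphable (Pi_cantor2 (Suc k)) (Ec k)"
proof
  assume "graphable (Pi_cantor2 (Suc k)) (Ec k)"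
  then obtain G where G: "Pi_cantor2 (Suc k) G" "irrefl G" "G\<^sup>* = Ec k" unfolding graphable_def by blast
  have gi: "(x, y) \<in> G \<longleftrightarrow> (x, y) \<in> Ec k \<and> x \<noteq> y" for x y
    by (rule cls_graph[OF G(2) G(3)]) (use Ec_cls in blast)
  obtain p where p: "sigma_fm (Suc k) p" "\<forall>x y. (x, y) \<in> - G \<longleftrightarrow> evf (\<lambda>_. 0) (cenv x y) p"
    using G(1) unfolding Pi_cantor2_def Sigma_cantor2_def cenv_def by blast
  then obtain d where d: "delta0 d" "p = exneg (Suc k) d" using sigma_exneg by blast
  let ?q = "substM (\<lambda>_. Zero) (Var 0) (Var 1) True p"
  have "?q = exneg (Suc k) (substM ((ups^^Suc k) (\<lambda>_. Zero)) ((liftt^^Suc k) (Var 0)) ((liftt^^Suc k) (Var 1)) True d)"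
    using d(2) by (simp only: substM_exneg)
  then have q: "sigma_fm (Suc k) ?q" using d(1) sigma_exneg2 delta0_substM by metis
  have qs: "evf (ne a b) X0 ?q = ((chi a, chi b) \<notin> G)" for a b
    using p(2) by (simp add: evf_substM Xm_chi[symmetric])
  have "Sigma_nat2 (Suc k) {(a, b). (chi a, chi b) \<notin> G}"
    unfolding Sigma_nat2_def using q qs unfolding ne_def by blast
  then have "Sigma_nat2 (Suc k) {(a, b). a \<noteq> b \<and> (a, b) \<in> {(a, b). (chi a, chi b) \<notin> G}}"
    by (rule Sigma_nat2_neq)
  note sig = this
  have ee: "(a \<noteq> b \<and> (chi a, chi b) \<notin> G) = ((a, b) \<in> - Enat k)" for a b
    using gi[of "chi a" "chi b"] Enat_refl[of a k] unfolding Ec_def by auto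
  have "{(a, b). a \<noteq> b \<and> (a, b) \<in> {(a, b). (chi a, chi b) \<notin> G}} = - Enat k"
    using ee by auto
  then show False using notPi sig by simp
qed

theorem proposition3p3:
  shows "(\<forall>n\<ge>2. \<exists>E :: (cantor \<times> cantor) set.
            equiv UNIV E \<and> Sigma_cantor2 n E \<and> \<not> graphable (Pi_cantor2 n) E)
       \<and> (\<forall>n\<ge>1. \<exists>E :: (nat \<times> nat) set.
            equiv UNIV E \<and> Sigma_nat2 n E \<and> \<not> graphable (Pi_nat2 n) E)"
proof (intro conjI allI impI)
  fix n :: nat assume "n \<ge> 2"
  then obtain k' where n: "n = Suc (Suc k')" by (metis add_2_eq_Suc le_Suc_ex)
  show "\<exists>E :: (cantor \<times> cantor) set. equiv UNIV E \<and> Sigma_cantor2 n E \<and> \<not> graphable (Pi_cantor2 n) E"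
    using Ec_equiv Sigma_Ec cantor_notgraph n by blast
next
  fix n :: nat assume "n \<ge> 1"
  then obtain k where n: "n = Suc k" by (metis Suc_le_D One_nat_def)
  show "\<exists>E :: (nat \<times> nat) set. equiv UNIV E \<and> Sigma_nat2 n E \<and> \<not> graphable (Pi_nat2 n) E"
    using Enat_equiv Sigma_Enat nat_notgraph n by blast
qed


end
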